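(* Let $\partial:\mathcal{F}\to C(G)$ be a derivation such that $(\partial f)\circ\varphi=\partial(f\circ\varphi)$ for all $f\in\mathcal F$. Then there exists a unique derivation $\delta_\partial:\mathcal{B}\to B$ such that $\delta_\partial(V)=0$ and $\delta_\partial(M_f)=M_{\partial f}$ for all $f\in\mathcal F$; moreover $\delta_\partial$ is invariant.
   Context: Setup: $G$ is an infinite compact (Hausdorff) abelian group, written additively, and $x_1\in G$ generates a dense cyclic subgroup; $x_n=nx_1$, $\varphi(x)=x+x_1$. $\widehat G$ is the group of continuous characters and $\mathcal{F}$ is their linear span in $C(G)$ (a $\varphi$-stable algebra). Let $H=\ell^2(\mathbb{Z})$ with canonical basis $\{E_l\}$; $VE_l=E_{l+1}$, $M_fE_l=f(x_l)E_l$, $\mathbb{L}E_l=lE_l$. $B=C^*(V,M_f:f\in C(G))$ (isomorphic to the crossed product $C(G)\rtimes_\varphi\mathbb Z$), and $\mathcal{B}$ is the $*$-subalgebra generated by $V,V^{-1},M_\chi$ ($\chi\in\widehat G$). A derivation is a linear map satisfying the Leibniz rule; $\delta:\mathcal B\to B$ is invariant if $e^{-i\theta\mathbb L}\delta(e^{i\theta\mathbb L}be^{-i\theta\mathbb L})e^{i\theta\mathbb L}=\delta(b)$ for all $\theta\in\mathbb R$, $b\in\mathcal B$. *)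

theory Defs
  imports "HOL-Analysis.Analysis"
begin

fun natmul :: "nat \<Rightarrow> 'a::ab_group_add \<Rightarrow> 'a" where
  "natmul 0 x = 0"
| "natmul (Suc n) x = x + natmul n x"

definition intmul :: "int \<Rightarrow> 'a::ab_group_add \<Rightarrow> 'a" where
  "intmul n x = (if 0 \<le> n then natmul (nat n) x else - natmul (nat (- n)) x)"

definition CG :: "('g::topological_space \<Rightarrow> complex) set" where
  "CG = {f. continuous_on UNIV f}"

definition characters :: "('g::{topological_ab_group_add} \<Rightarrow> complex) set" where
  "characters = {ch. continuous_on UNIV ch \<and> (\<forall>x. cmod (ch x) = 1)
                      \<and> (\<forall>x y. ch (x + y) = ch x * ch y)}"

definition Fspan :: "('g::{topological_ab_group_add} \<Rightarrow> complex) set" where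
  "Fspan = {f. \<exists>S c. finite S \<and> S \<subseteq> characters \<and> f = (\<lambda>x. \<Sum>ch\<in>S. c ch * ch x)}"

definition is_F_derivation :: "(('g::{topological_ab_group_add} \<Rightarrow> complex) \<Rightarrow> ('g \<Rightarrow> complex)) \<Rightarrow> bool" where
  "is_F_derivation d \<longleftrightarrow>
     (\<forall>f\<in>Fspan. d f \<in> CG) \<and>
     (\<forall>f\<in>Fspan. \<forall>g\<in>Fspan. d (\<lambda>x. f x + g x) = (\<lambda>x. d f x + d g x)) \<and>
     (\<forall>f\<in>Fspan. \<forall>c::complex. d (\<lambda>x. c * f x) = (\<lambda>x. c * d f x)) \<and>
     (\<forall>f\<in>Fspan. \<forall>g\<in>Fspan. d (\<lambda>x. f x * g x) = (\<lambda>x. d f x * g x + f x * d g x))"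

typedef ell2 = "{v :: int \<Rightarrow> complex. (\<lambda>n. (cmod (v n))\<^sup>2) summable_on UNIV}"
  by (rule exI[of _ "\<lambda>_. 0"]) simp

instantiation ell2 :: "{zero, plus, minus, uminus}"
begin
definition "0 = Abs_ell2 (\<lambda>_. 0)"
definition "x + y = Abs_ell2 (\<lambda>n. Rep_ell2 x n + Rep_ell2 y n)"
definition "x - y = Abs_ell2 (\<lambda>n. Rep_ell2 x n - Rep_ell2 y n)"
definition "- x = Abs_ell2 (\<lambda>n. - Rep_ell2 x n)"
instance ..
end

definition l2scale :: "complex \<Rightarrow> ell2 \<Rightarrow> ell2" where
  "l2scale c x = Abs_ell2 (\<lambda>n. c * Rep_ell2 x n)"

definition l2norm :: "ell2 \<Rightarrow> real" where
  "l2norm x = sqrt (\<Sum>\<^sub>\<infinity>n. (cmod (Rep_ell2 x n))\<^sup>2)"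

definition l2inner :: "ell2 \<Rightarrow> ell2 \<Rightarrow> complex" where
  "l2inner x y = (\<Sum>\<^sub>\<infinity>n. cnj (Rep_ell2 x n) * Rep_ell2 y n)"

type_synonym op = "ell2 \<Rightarrow> ell2"

definition bounded_op :: "op \<Rightarrow> bool" where
  "bounded_op T \<longleftrightarrow> (\<forall>x y. T (x + y) = T x + T y) \<and> (\<forall>c x. T (l2scale c x) = l2scale c (T x))
      \<and> (\<exists>K. \<forall>x. l2norm (T x) \<le> K * l2norm x)"

definition opnorm :: "op \<Rightarrow> real" where
  "opnorm T = (SUP x\<in>{x. l2norm x \<le> 1}. l2norm (T x))"

definition op_zero :: op where "op_zero = (\<lambda>x. 0)"
definition op_add :: "op \<Rightarrow> op \<Rightarrow> op" where "op_add S T = (\<lambda>x. S x + T x)"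
definition op_diff :: "op \<Rightarrow> op \<Rightarrow> op" where "op_diff S T = (\<lambda>x. S x - T x)"
definition op_scale :: "complex \<Rightarrow> op \<Rightarrow> op" where "op_scale c T = (\<lambda>x. l2scale c (T x))"
definition op_mult :: "op \<Rightarrow> op \<Rightarrow> op" where "op_mult S T = S \<circ> T"

definition op_adj :: "op \<Rightarrow> op" where
  "op_adj T = (THE S. \<forall>x y. l2inner (T x) y = l2inner x (S y))"

inductive_set star_alg :: "op set \<Rightarrow> op set" for S where
  gen: "T \<in> S \<Longrightarrow> T \<in> star_alg S"
| add: "T1 \<in> star_alg S \<Longrightarrow> T2 \<in> star_alg S \<Longrightarrow> op_add T1 T2 \<in> star_alg S"
| scale: "T \<in> star_alg S \<Longrightarrow> op_scale c T \<in> star_alg S"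
| mult: "T1 \<in> star_alg S \<Longrightarrow> T2 \<in> star_alg S \<Longrightarrow> op_mult T1 T2 \<in> star_alg S"
| adj: "T \<in> star_alg S \<Longrightarrow> op_adj T \<in> star_alg S"

definition cstar_alg :: "op set \<Rightarrow> op set" where
  "cstar_alg S = {T. bounded_op T \<and> (\<forall>e>0. \<exists>A\<in>star_alg S. opnorm (op_diff T A) < e)}"

text \<open>V E_l = E_(l+1),  V^{-1} E_l = E_(l-1),  M_f E_l = f(x_l) E_l with x_l = l x_1,
  and e^{i theta L} E_l = e^{i theta l} E_l.\<close>
definition Vop :: op where "Vop x = Abs_ell2 (\<lambda>l. Rep_ell2 x (l - 1))"
definition Vinv :: op where "Vinv x = Abs_ell2 (\<lambda>l. Rep_ell2 x (l + 1))"
definition Mop :: "'g::ab_group_add \<Rightarrow> ('g \<Rightarrow> complex) \<Rightarrow> op" where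
  "Mop x1 f x = Abs_ell2 (\<lambda>l. f (intmul l x1) * Rep_ell2 x l)"
definition expL :: "real \<Rightarrow> op" where
  "expL \<theta> x = Abs_ell2 (\<lambda>l. exp (\<i> * complex_of_real (\<theta> * real_of_int l)) * Rep_ell2 x l)"

definition Balg :: "'g::topological_ab_group_add \<Rightarrow> op set" where
  "Balg x1 = cstar_alg ({Vop} \<union> {Mop x1 f | f. f \<in> CG})"

definition Bcal :: "'g::topological_ab_group_add \<Rightarrow> op set" where
  "Bcal x1 = star_alg ({Vop, Vinv} \<union> {Mop x1 ch | ch. ch \<in> characters})"

definition is_B_derivation :: "'g::topological_ab_group_add \<Rightarrow> (op \<Rightarrow> op) \<Rightarrow> bool" where
  "is_B_derivation x1 \<delta> \<longleftrightarrow>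
     (\<forall>b\<in>Bcal x1. \<delta> b \<in> Balg x1) \<and>
     (\<forall>a\<in>Bcal x1. \<forall>b\<in>Bcal x1. \<delta> (op_add a b) = op_add (\<delta> a) (\<delta> b)) \<and>
     (\<forall>a\<in>Bcal x1. \<forall>c. \<delta> (op_scale c a) = op_scale c (\<delta> a)) \<and>
     (\<forall>a\<in>Bcal x1. \<forall>b\<in>Bcal x1. \<delta> (op_mult a b) = op_add (op_mult (\<delta> a) b) (op_mult a (\<delta> b)))"

definition invariant_der :: "'g::topological_ab_group_add \<Rightarrow> (op \<Rightarrow> op) \<Rightarrow> bool" where
  "invariant_der x1 \<delta> \<longleftrightarrow>
     (\<forall>\<theta>::real. \<forall>b\<in>Bcal x1.
        op_mult (op_mult (expL (-\<theta>)) (\<delta> (op_mult (op_mult (expL \<theta>) b) (expL (-\<theta>))))) (expL \<theta>) = \<delta> b)"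

end

theory Submission
  imports Defs
begin

lemma natmul_add: "natmul (m + n) x = natmul m x + natmul n x"
  by (induction m) (auto simp: algebra_simps)

lemma intmul_succ: "intmul (k + 1) x = x + intmul k x"
proof (cases "0 \<le> k")
  case True
  then have "nat (k+1) = Suc (nat k)" by simp
  then show ?thesis using True by (simp add: intmul_def)
next
  case False
  show ?thesis
  proof (cases "k = -1")
    case True then show ?thesis by (simp add: intmul_def)
  next
    case F2: False
    with False have "nat (-k) = Suc (nat (-(k+1)))" by simp
    then show ?thesis using False F2 by (simp add: intmul_def algebra_simps)
  qed
qed

lemma intmul_add: "intmul (a + b) x = intmul a x + intmul b x"
proof (induction a rule: int_induct[where k=0])
  case base then show ?case by (simp add: intmul_def)
next
  case (step1 i)
  have "intmul (i + 1 + b) x = intmul ((i + b) + 1) x" by (simp add: algebra_simps)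
  also have "\<dots> = x + intmul (i+b) x" by (rule intmul_succ)
  finally show ?case using step1 intmul_succ[of i x] by (simp add: algebra_simps)
next
  case (step2 i)
  have a: "intmul (i + b) x = x + intmul (i - 1 + b) x" using intmul_succ[of "i - 1 + b" x] by (simp add: algebra_simps)
  have b: "intmul i x = x + intmul (i - 1) x" using intmul_succ[of "i - 1" x] by simp
  show ?case using step2 a b by (simp add: algebra_simps)
qed

lemma intmul_0[simp]: "intmul 0 x = 0" by (simp add: intmul_def)
lemma intmul_1[simp]: "intmul 1 x = x" by (simp add: intmul_def)

lemma intmul_minus: "intmul (-a) x = - intmul a x"
  using intmul_add[of a "-a" x] by (simp add: eq_neg_iff_add_eq_0 add.commute)

lemma intmul_diff: "intmul (a - b) x = intmul a x - intmul b x"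
  using intmul_add[of a "-b" x] intmul_minus[of b x] by simp

definition sq :: "(int \<Rightarrow> complex) \<Rightarrow> bool" where
  "sq v \<longleftrightarrow> (\<lambda>n. (cmod (v n))\<^sup>2) summable_on UNIV"

lemma sq_Rep: "sq (Rep_ell2 x)" using Rep_ell2[of x] by (simp add: sq_def)
lemma Rep_Abs: "sq v \<Longrightarrow> Rep_ell2 (Abs_ell2 v) = v" by (simp add: Abs_ell2_inverse sq_def)

lemma sq_add:
  assumes "sq u" "sq v" shows "sq (\<lambda>n. u n + v n)"
  unfolding sq_def
proof (rule summable_on_comparison_test)
  show "(\<lambda>n. 2 * (cmod (u n))\<^sup>2 + 2 * (cmod (v n))\<^sup>2) summable_on UNIV"
    using assms unfolding sq_def by (intro summable_on_add summable_on_cmult_right)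
  fix n
  have "cmod (u n + v n) \<le> cmod (u n) + cmod (v n)" by (rule norm_triangle_ineq)
  then have "(cmod (u n + v n))\<^sup>2 \<le> (cmod (u n) + cmod (v n))\<^sup>2" by (simp add: power_mono)
  also have "\<dots> \<le> 2 * (cmod (u n))\<^sup>2 + 2 * (cmod (v n))\<^sup>2"
    by (smt (verit) sum_squares_ge_zero power2_sum zero_le_power2 power2_diff)
  finally show "(cmod (u n + v n))\<^sup>2 \<le> 2 * (cmod (u n))\<^sup>2 + 2 * (cmod (v n))\<^sup>2" .
qed simp

lemma sq_bmult:
  assumes "sq v" "\<And>n. cmod (a n) \<le> C" shows "sq (\<lambda>n. a n * v n)"
  unfolding sq_def
proof (rule summable_on_comparison_test)
  show "(\<lambda>n. C\<^sup>2 * (cmod (v n))\<^sup>2) summable_on UNIV"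
    using assms unfolding sq_def by (intro summable_on_cmult_right)
  fix n
  have "(cmod (a n))\<^sup>2 \<le> C\<^sup>2" using assms(2)[of n] by (simp add: power_mono)
  then show "(cmod (a n * v n))\<^sup>2 \<le> C\<^sup>2 * (cmod (v n))\<^sup>2"
    by (simp add: norm_mult power_mult_distrib mult_right_mono)
qed simp

lemma bij_shift: "bij_betw (\<lambda>n::int. n - m) UNIV UNIV"
  by (rule bij_betwI[where g="\<lambda>n. n + m"]) auto

lemma sq_shift: "sq v \<Longrightarrow> sq (\<lambda>n. v (n - m))"
  unfolding sq_def using summable_on_reindex_bij_betw[OF bij_shift, of "\<lambda>n. (cmod (v n))\<^sup>2" m] by simp

lemma infsum_shift: "infsum (\<lambda>n. h (n - m)) (UNIV::int set) = infsum h UNIV"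
  using infsum_reindex_bij_betw[OF bij_shift, of h m] by simp

lemma summable_shift: "(\<lambda>n. h (n - m)) summable_on (UNIV::int set) \<longleftrightarrow> h summable_on UNIV"
  using summable_on_reindex_bij_betw[OF bij_shift, of h m] by simp

lemma Rep_plus: "Rep_ell2 (a + b) = (\<lambda>n. Rep_ell2 a n + Rep_ell2 b n)"
  by (simp add: plus_ell2_def Rep_Abs sq_add sq_Rep)
lemma Rep_minus: "Rep_ell2 (a - b) = (\<lambda>n. Rep_ell2 a n - Rep_ell2 b n)"
proof -
  have "sq (\<lambda>n. Rep_ell2 a n + (-1) * Rep_ell2 b n)"
    by (intro sq_add sq_bmult[where C=1] sq_Rep) simp
  then show ?thesis by (simp add: minus_ell2_def Rep_Abs)
qed
lemma Rep_zero: "Rep_ell2 0 = (\<lambda>n. 0)"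
  by (simp add: zero_ell2_def Rep_Abs sq_def)
lemma Rep_scale: "Rep_ell2 (l2scale c a) = (\<lambda>n. c * Rep_ell2 a n)"
  by (simp add: l2scale_def Rep_Abs sq_bmult[where C="cmod c"] sq_Rep)

lemma ell2_eqI: "(\<And>n. Rep_ell2 a n = Rep_ell2 b n) \<Longrightarrow> a = b"
  by (metis Rep_ell2_inject ext)



section \<open>Finite sums of monomials M_f V^n\<close>

definition ev :: "'g::ab_group_add \<Rightarrow> (('g \<Rightarrow> complex) \<times> int) list \<Rightarrow> ell2 \<Rightarrow> int \<Rightarrow> complex" where
  "ev x1 L x k = (\<Sum>(f,n)\<leftarrow>L. f (intmul k x1) * Rep_ell2 x (k - n))"

definition sumop :: "'g::ab_group_add \<Rightarrow> (('g \<Rightarrow> complex) \<times> int) list \<Rightarrow> op" where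
  "sumop x1 L x = Abs_ell2 (ev x1 L x)"

definition okL :: "(('g \<Rightarrow> complex) \<times> int) list \<Rightarrow> bool" where
  "okL L \<longleftrightarrow> (\<forall>p\<in>set L. \<exists>C. \<forall>g. cmod (fst p g) \<le> C)"

lemma ev_Nil[simp]: "ev x1 [] x k = 0" by (simp add: ev_def)
lemma ev_Cons[simp]: "ev x1 ((f,n)#L) x k = f (intmul k x1) * Rep_ell2 x (k - n) + ev x1 L x k"
  by (simp add: ev_def)
lemma ev_append[simp]: "ev x1 (L1 @ L2) x k = ev x1 L1 x k + ev x1 L2 x k"
  by (simp add: ev_def)

lemma okL_Nil[simp]: "okL []" by (simp add: okL_def)
lemma okL_Cons[simp]: "okL ((f,n)#L) \<longleftrightarrow> (\<exists>C. \<forall>g. cmod (f g) \<le> C) \<and> okL L"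
  by (simp add: okL_def)
lemma okL_append[simp]: "okL (L1 @ L2) \<longleftrightarrow> okL L1 \<and> okL L2"
  by (auto simp add: okL_def)

lemma sq_ev: "okL L \<Longrightarrow> sq (ev x1 L x)"
proof (induction L)
  case Nil then show ?case by (simp add: sq_def)
next
  case (Cons p L)
  obtain f n where p: "p = (f,n)" by fastforce
  from Cons obtain C where C: "\<And>g. cmod (f g) \<le> C" by (auto simp: p)
  have "sq (\<lambda>k. f (intmul k x1) * Rep_ell2 x (k - n))"
    by (rule sq_bmult[OF sq_shift[OF sq_Rep] C])
  then show ?case using Cons by (simp add: p sq_add)
qed

lemma Rep_sumop: "okL L \<Longrightarrow> Rep_ell2 (sumop x1 L x) = ev x1 L x"
  by (simp add: sumop_def Rep_Abs sq_ev)

lemma sumop_eqI: "okL L1 \<Longrightarrow> okL L2 \<Longrightarrow> (\<And>x k. ev x1 L1 x k = ev x1 L2 x k) \<Longrightarrow> sumop x1 L1 = sumop x1 L2"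
  by (auto simp: sumop_def intro!: ext arg_cong[where f=Abs_ell2])

lemma sumop_append: "okL L1 \<Longrightarrow> okL L2 \<Longrightarrow> op_add (sumop x1 L1) (sumop x1 L2) = sumop x1 (L1 @ L2)"
  by (auto simp: op_add_def plus_ell2_def Rep_sumop intro!: ext) (simp add: sumop_def, rule arg_cong[where f=Abs_ell2], rule ext, simp)

definition scL :: "complex \<Rightarrow> (('g \<Rightarrow> complex) \<times> int) list \<Rightarrow> (('g \<Rightarrow> complex) \<times> int) list" where
  "scL c L = map (\<lambda>(f,n). (\<lambda>g. c * f g, n)) L"

lemma scL_simps[simp]: "scL c [] = []" "scL c ((f,n)#L) = (\<lambda>g. c * f g, n) # scL c L"
  by (simp_all add: scL_def)

lemma okL_scL: "okL L \<Longrightarrow> okL (scL c L)"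
proof (induction L)
  case (Cons p L)
  obtain f n where p: "p = (f,n)" by fastforce
  from Cons obtain C where C: "\<And>g. cmod (f g) \<le> C" by (auto simp: p)
  have "\<forall>g. cmod (c * f g) \<le> cmod c * C" using C by (simp add: norm_mult mult_left_mono)
  then show ?case using Cons by (auto simp: p)
qed simp

lemma ev_scL: "ev x1 (scL c L) x k = c * ev x1 L x k"
  by (induction L) (auto simp: algebra_simps)

lemma sumop_scale: "okL L \<Longrightarrow> op_scale c (sumop x1 L) = sumop x1 (scL c L)"
  by (auto simp: op_scale_def l2scale_def Rep_sumop ev_scL intro!: ext) (simp add: sumop_def, rule arg_cong[where f=Abs_ell2], rule ext, simp add: ev_scL)

definition mulL :: "'g::ab_group_add \<Rightarrow> (('g \<Rightarrow> complex) \<times> int) list \<Rightarrow> (('g \<Rightarrow> complex) \<times> int) list \<Rightarrow> (('g \<Rightarrow> complex) \<times> int) list" where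
  "mulL x1 L1 L2 = concat (map (\<lambda>(f,n). map (\<lambda>(h,m). (\<lambda>g. f g * h (g - intmul n x1), n + m)) L2) L1)"

lemma mulL_Nil[simp]: "mulL x1 [] L2 = []" by (simp add: mulL_def)
lemma mulL_Cons[simp]: "mulL x1 ((f,n)#L1) L2 = map (\<lambda>(h,m). (\<lambda>g. f g * h (g - intmul n x1), n + m)) L2 @ mulL x1 L1 L2"
  by (simp add: mulL_def)

lemma okL_mul1:
  assumes "\<And>g. cmod (f g) \<le> C" "okL L2"
  shows "okL (map (\<lambda>(h,m). (\<lambda>g. f g * h (g - intmul n x1), n + m)) L2)"
  using assms(2)
proof (induction L2)
  case (Cons p L)
  obtain h m where p: "p = (h,m)" by fastforce
  from Cons obtain D where D: "\<And>g. cmod (h g) \<le> D" by (auto simp: p)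
  have "\<forall>g. cmod (f g * h (g - intmul n x1)) \<le> C * D"
    using assms(1) D by (simp add: norm_mult mult_mono' order_trans[OF _ assms(1)])
  then show ?case using Cons by (auto simp: p)
qed simp

lemma okL_mulL: "okL L1 \<Longrightarrow> okL L2 \<Longrightarrow> okL (mulL x1 L1 L2)"
proof (induction L1)
  case (Cons p L)
  obtain f n where p: "p = (f,n)" by fastforce
  from Cons obtain C where C: "\<And>g. cmod (f g) \<le> C" by (auto simp: p)
  show ?case using Cons okL_mul1[OF C Cons.prems(2), where n=n and ?x1.0=x1] by (simp add: p)
qed simp

lemma ev_mul1: "ev x1 (map (\<lambda>(h,m). (\<lambda>g. f g * h (g - intmul n x1), n + m)) L2) x k
   = f (intmul k x1) * ev x1 L2 x (k - n)"
  by (induction L2) (auto simp: algebra_simps intmul_diff)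

lemma ev_mulL: "okL L2 \<Longrightarrow> ev x1 (mulL x1 L1 L2) x k = ev x1 L1 (sumop x1 L2 x) k"
  by (induction L1) (auto simp: ev_mul1 Rep_sumop)

lemma sumop_mult:
  assumes "okL L1" "okL L2"
  shows "op_mult (sumop x1 L1) (sumop x1 L2) = sumop x1 (mulL x1 L1 L2)"
proof (rule ext)
  fix x
  have "ev x1 (mulL x1 L1 L2) x = ev x1 L1 (sumop x1 L2 x)"
    by (rule ext) (simp add: ev_mulL assms)
  then show "op_mult (sumop x1 L1) (sumop x1 L2) x = sumop x1 (mulL x1 L1 L2) x"
    by (simp add: op_mult_def sumop_def[of x1 "mulL x1 L1 L2"]) (simp add: sumop_def)
qed

lemma Mop_sumop: "Mop x1 f = sumop x1 [(f,0)]"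
  by (rule ext, unfold Mop_def sumop_def, rule arg_cong[where f=Abs_ell2], rule ext, simp)
lemma Vop_sumop: "Vop = sumop x1 [(\<lambda>_. 1, 1)]"
  by (rule ext, unfold Vop_def sumop_def, rule arg_cong[where f=Abs_ell2], rule ext, simp)
lemma Vinv_sumop: "Vinv = sumop x1 [(\<lambda>_. 1, -1)]"
  by (rule ext, unfold Vinv_def sumop_def, rule arg_cong[where f=Abs_ell2], rule ext, simp)
lemma zero_sumop: "op_zero = sumop x1 []"
  by (rule ext, unfold op_zero_def sumop_def zero_ell2_def, rule arg_cong[where f=Abs_ell2], rule ext, simp)


lemma sq_inner_summable:
  assumes "sq u" "sq v" shows "(\<lambda>n. cnj (u n) * v n) summable_on UNIV"
proof -
  have "(\<lambda>n. norm (cnj (u n) * v n)) summable_on UNIV"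
  proof (rule summable_on_comparison_test)
    show "(\<lambda>n. (cmod (u n))\<^sup>2 + (cmod (v n))\<^sup>2) summable_on UNIV"
      using assms unfolding sq_def by (rule summable_on_add)
    fix n
    have a: "0 \<le> (cmod (u n) - cmod (v n))\<^sup>2" by simp
    have b: "0 \<le> cmod (u n) * cmod (v n)" by simp
    have "cmod (u n) * cmod (v n) \<le> (cmod (u n))\<^sup>2 + (cmod (v n))\<^sup>2"
      using a b unfolding power2_diff by linarith
    then show "norm (cnj (u n) * v n) \<le> (cmod (u n))\<^sup>2 + (cmod (v n))\<^sup>2"
      by (simp add: norm_mult)
  qed simp
  then show ?thesis by (rule abs_summable_summable)
qed

definition adjL :: "'g::ab_group_add \<Rightarrow> (('g \<Rightarrow> complex) \<times> int) list \<Rightarrow> (('g \<Rightarrow> complex) \<times> int) list" where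
  "adjL x1 L = map (\<lambda>(f,n). (\<lambda>g. cnj (f (g + intmul n x1)), -n)) L"

lemma adjL_simps[simp]: "adjL x1 [] = []"
  "adjL x1 ((f,n)#L) = (\<lambda>g. cnj (f (g + intmul n x1)), -n) # adjL x1 L"
  by (simp_all add: adjL_def)

lemma okL_adjL: "okL L \<Longrightarrow> okL (adjL x1 L)"
proof (induction L)
  case (Cons p L)
  obtain f n where p: "p = (f,n)" by fastforce
  from Cons obtain C where C: "\<And>g. cmod (f g) \<le> C" by (auto simp: p)
  then show ?case using Cons by (auto simp: p)
qed simp

lemma inner_single:
  "infsum (\<lambda>k. cnj (f (intmul k x1) * Rep_ell2 x (k - n)) * Rep_ell2 y k) UNIV
   = infsum (\<lambda>j. cnj (Rep_ell2 x j) * (cnj (f (intmul j x1 + intmul n x1)) * Rep_ell2 y (j + n))) UNIV"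
proof -
  let ?h = "\<lambda>k. cnj (f (intmul k x1) * Rep_ell2 x (k - n)) * Rep_ell2 y k"
  have "infsum ?h UNIV = infsum (\<lambda>j. ?h (j - (-n))) UNIV" by (rule infsum_shift[symmetric])
  also have "\<dots> = infsum (\<lambda>j. cnj (Rep_ell2 x j) * (cnj (f (intmul j x1 + intmul n x1)) * Rep_ell2 y (j + n))) UNIV"
    by (rule infsum_cong) (simp add: intmul_add)
  finally show ?thesis .
qed

lemma adjL_inner:
  assumes "okL L"
  shows "l2inner (sumop x1 L x) y = l2inner x (sumop x1 (adjL x1 L) y)"
proof -
  have "infsum (\<lambda>k. cnj (ev x1 L x k) * Rep_ell2 y k) UNIV
      = infsum (\<lambda>j. cnj (Rep_ell2 x j) * ev x1 (adjL x1 L) y j) UNIV"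
    using assms
  proof (induction L)
    case Nil then show ?case by simp
  next
    case (Cons p L)
    obtain f n where p: "p = (f,n)" by fastforce
    from Cons obtain C where C: "\<And>g. cmod (f g) \<le> C" by (auto simp: p)
    have okL: "okL L" using Cons by (simp add: p)
    have sq1: "sq (\<lambda>k. f (intmul k x1) * Rep_ell2 x (k - n))"
      by (rule sq_bmult[OF sq_shift[OF sq_Rep] C])
    have sq2: "sq (\<lambda>j. cnj (f (intmul j x1 + intmul n x1)) * Rep_ell2 y (j - (-n)))"
      by (rule sq_bmult[OF sq_shift[OF sq_Rep], where C=C]) (simp add: C)
    have "infsum (\<lambda>k. cnj (ev x1 (p#L) x k) * Rep_ell2 y k) UNIV
        = infsum (\<lambda>k. cnj (f (intmul k x1) * Rep_ell2 x (k - n)) * Rep_ell2 y k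
                     + cnj (ev x1 L x k) * Rep_ell2 y k) UNIV"
      by (simp add: p algebra_simps)
    also have "\<dots> = infsum (\<lambda>k. cnj (f (intmul k x1) * Rep_ell2 x (k - n)) * Rep_ell2 y k) UNIV
                   + infsum (\<lambda>k. cnj (ev x1 L x k) * Rep_ell2 y k) UNIV"
      by (rule infsum_add; rule sq_inner_summable[OF _ sq_Rep]) (use sq1 sq_ev[OF okL] in auto)
    also have "\<dots> = infsum (\<lambda>j. cnj (Rep_ell2 x j) * (cnj (f (intmul j x1 + intmul n x1)) * Rep_ell2 y (j + n))) UNIV
                   + infsum (\<lambda>j. cnj (Rep_ell2 x j) * ev x1 (adjL x1 L) y j) UNIV"
      by (simp only: inner_single Cons.IH[OF okL])
    also have "\<dots> = infsum (\<lambda>j. cnj (Rep_ell2 x j) * (cnj (f (intmul j x1 + intmul n x1)) * Rep_ell2 y (j + n))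
                   + cnj (Rep_ell2 x j) * ev x1 (adjL x1 L) y j) UNIV"
      by (rule infsum_add[symmetric]; rule sq_inner_summable[OF sq_Rep]) (use sq2 sq_ev[OF okL_adjL[OF okL]] in auto)
    also have "\<dots> = infsum (\<lambda>j. cnj (Rep_ell2 x j) * ev x1 (adjL x1 (p#L)) y j) UNIV"
      by (simp add: p algebra_simps)
    finally show ?case .
  qed
  then show ?thesis
    by (simp add: l2inner_def Rep_sumop assms okL_adjL)
qed

definition evec :: "int \<Rightarrow> ell2" where "evec j = Abs_ell2 (\<lambda>k. if k = j then 1 else 0)"

lemma Rep_evec: "Rep_ell2 (evec j) = (\<lambda>k. if k = j then 1 else 0)"
proof -
  have "sq (\<lambda>k. if k = j then 1 else 0)" unfolding sq_def
    by (rule finite_nonzero_values_imp_summable_on) (rule finite_subset[of _ "{j}"], auto)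
  then show ?thesis by (simp add: evec_def Rep_Abs)
qed

lemma inner_evec: "l2inner (evec j) z = Rep_ell2 z j"
proof -
  have e: "(\<lambda>k. cnj (Rep_ell2 (evec j) k) * Rep_ell2 z k) = (\<lambda>k. if k = j then Rep_ell2 z k else 0)"
    by (auto simp: Rep_evec)
  have "l2inner (evec j) z = infsum (\<lambda>k. if k = j then Rep_ell2 z k else 0) UNIV"
    unfolding l2inner_def e ..
  also have "\<dots> = infsum (\<lambda>k. Rep_ell2 z k) {j}"
    by (rule infsum_cong_neutral) auto
  finally show ?thesis by simp
qed

lemma op_adj_eq:
  assumes "\<And>x y. l2inner (T x) y = l2inner x (S y)"
  shows "op_adj T = S"
  unfolding op_adj_def
proof (rule the_equality)
  show "\<forall>x y. l2inner (T x) y = l2inner x (S y)" using assms by blast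
  fix S' assume "\<forall>x y. l2inner (T x) y = l2inner x (S' y)"
  then have "\<And>y j. l2inner (evec j) (S' y) = l2inner (evec j) (S y)" using assms by metis
  then show "S' = S" by (auto simp: inner_evec intro!: ext ell2_eqI)
qed

lemma op_adj_sumop: "okL L \<Longrightarrow> op_adj (sumop x1 L) = sumop x1 (adjL x1 L)"
  by (rule op_adj_eq) (rule adjL_inner)


lemma char_cont: "ch \<in> characters \<Longrightarrow> continuous_on UNIV ch" by (simp add: characters_def)

lemma Fspan_cont: "f \<in> Fspan \<Longrightarrow> continuous_on UNIV f"
  unfolding Fspan_def
  by (elim CollectE exE conjE) (simp, rule continuous_on_sum, rule continuous_on_mult[OF continuous_on_const], auto intro: char_cont)

lemma one_char: "(\<lambda>_. 1) \<in> characters" by (simp add: characters_def)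

lemma char_mult: "ch \<in> characters \<Longrightarrow> ps \<in> characters \<Longrightarrow> (\<lambda>x. ch x * ps x) \<in> characters"
  by (auto simp: characters_def norm_mult intro!: continuous_intros)

lemma char_cnj: "ch \<in> characters \<Longrightarrow> (\<lambda>x. cnj (ch x)) \<in> characters"
  by (auto simp: characters_def intro!: continuous_intros)

lemma char_Fspan: "ch \<in> characters \<Longrightarrow> ch \<in> Fspan"
  unfolding Fspan_def mem_Collect_eq by (rule exI[of _ "{ch}"], rule exI[of _ "\<lambda>_. 1"]) auto

lemma Fspan_zero: "(\<lambda>_. 0) \<in> Fspan"
  unfolding Fspan_def mem_Collect_eq by (rule exI[of _ "{}"]) auto

lemma Fspan_scale: "f \<in> Fspan \<Longrightarrow> (\<lambda>x. c * f x) \<in> Fspan"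
  unfolding Fspan_def
proof (elim CollectE exE conjE, intro CollectI exI conjI)
  fix S cc assume "finite S" "S \<subseteq> characters" "f = (\<lambda>x. \<Sum>ch\<in>S. cc ch * ch x)"
  then show "finite S" "S \<subseteq> characters" "(\<lambda>x. c * f x) = (\<lambda>x. \<Sum>ch\<in>S. (c * cc ch) * ch x)"
    by (auto simp: sum_distrib_left mult.assoc)
qed

lemma Fspan_add: "f \<in> Fspan \<Longrightarrow> g \<in> Fspan \<Longrightarrow> (\<lambda>x. f x + g x) \<in> Fspan"
proof -
  assume "f \<in> Fspan" "g \<in> Fspan"
  then obtain S c T e where S: "finite S" "S \<subseteq> characters" "f = (\<lambda>x. \<Sum>ch\<in>S. c ch * ch x)"
    and T: "finite T" "T \<subseteq> characters" "g = (\<lambda>x. \<Sum>ch\<in>T. e ch * ch x)"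
    unfolding Fspan_def by blast
  define cc where "cc = (\<lambda>ch. (if ch \<in> S then c ch else 0) + (if ch \<in> T then e ch else 0))"
  have e1: "(\<Sum>ch\<in>S. c ch * ch x) = (\<Sum>ch\<in>S\<union>T. (if ch \<in> S then c ch else 0) * ch x)" for x
    by (rule sum.mono_neutral_cong_right[symmetric]) (use S(1) T(1) in auto)
  have e2: "(\<Sum>ch\<in>T. e ch * ch x) = (\<Sum>ch\<in>S\<union>T. (if ch \<in> T then e ch else 0) * ch x)" for x
    by (rule sum.mono_neutral_cong_right[symmetric]) (use S(1) T(1) in auto)
  have eq: "f x + g x = (\<Sum>ch\<in>S\<union>T. cc ch * ch x)" for x
    unfolding S(3) T(3) e1 e2 cc_def by (simp only: sum.distrib[symmetric] distrib_right)
  have "finite (S \<union> T)" "S \<union> T \<subseteq> characters" using S T by auto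
  with eq show ?thesis unfolding Fspan_def mem_Collect_eq
    by (intro exI[of _ "S \<union> T"] exI[of _ cc]) auto
qed

lemma Fspan_sum: "finite S \<Longrightarrow> (\<And>i. i \<in> S \<Longrightarrow> h i \<in> Fspan) \<Longrightarrow> (\<lambda>x. \<Sum>i\<in>S. h i x) \<in> Fspan"
  by (induction S rule: finite_induct) (auto simp: Fspan_zero Fspan_add)

lemma Fspan_elim:
  assumes "f \<in> Fspan"
  obtains S c where "finite S" "S \<subseteq> characters" "f = (\<lambda>x. \<Sum>ch\<in>S. c ch * ch x)"
  using assms unfolding Fspan_def by blast

lemma Fspan_char_mult:
  assumes "ch \<in> characters" "g \<in> Fspan" shows "(\<lambda>x. ch x * g x) \<in> Fspan"
proof -
  obtain T e where T: "finite T" "T \<subseteq> characters" "g = (\<lambda>x. \<Sum>ps\<in>T. e ps * ps x)"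
    using assms(2) by (rule Fspan_elim)
  have "(\<lambda>x. ch x * g x) = (\<lambda>x. \<Sum>ps\<in>T. e ps * (ch x * ps x))"
    by (rule ext) (simp add: T(3) sum_distrib_left mult.left_commute)
  also have "\<dots> \<in> Fspan"
    using T assms(1) by (intro Fspan_sum Fspan_scale char_Fspan char_mult) auto
  finally show ?thesis .
qed

lemma Fspan_mult:
  assumes "f \<in> Fspan" "g \<in> Fspan" shows "(\<lambda>x. f x * g x) \<in> Fspan"
proof -
  obtain S c where S: "finite S" "S \<subseteq> characters" "f = (\<lambda>x. \<Sum>ch\<in>S. c ch * ch x)"
    using assms(1) by (rule Fspan_elim)
  have "(\<lambda>x. f x * g x) = (\<lambda>x. \<Sum>ch\<in>S. c ch * (ch x * g x))"
    by (rule ext) (simp add: S sum_distrib_right mult.assoc)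
  also have "\<dots> \<in> Fspan"
    using S assms(2) by (intro Fspan_sum Fspan_scale Fspan_char_mult) auto
  finally show ?thesis .
qed

lemma Fspan_shift:
  assumes "f \<in> Fspan" shows "(\<lambda>x. f (x + a)) \<in> Fspan"
proof -
  obtain S c where S: "finite S" "S \<subseteq> characters" "f = (\<lambda>x. \<Sum>ch\<in>S. c ch * ch x)"
    using assms(1) by (rule Fspan_elim)
  have m: "ch (x + a) = ch x * ch a" if "ch \<in> S" for ch x
  proof -
    from S(2) that have "ch \<in> characters" by blast
    then show ?thesis by (simp add: characters_def)
  qed
  have "f (x + a) = (\<Sum>ch\<in>S. (c ch * ch a) * ch x)" for x
    unfolding S(3) by (rule sum.cong[OF refl]) (simp add: m)
  then have "(\<lambda>x. f (x + a)) = (\<lambda>x. \<Sum>ch\<in>S. (c ch * ch a) * ch x)" by (rule ext)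
  then show ?thesis using S(1,2) unfolding Fspan_def mem_Collect_eq
    by (intro exI[of _ S] exI[of _ "\<lambda>ch. c ch * ch a"]) auto
qed

lemma Fspan_cnj:
  assumes "f \<in> Fspan" shows "(\<lambda>x. cnj (f x)) \<in> Fspan"
proof -
  obtain S c where S: "finite S" "S \<subseteq> characters" "f = (\<lambda>x. \<Sum>ch\<in>S. c ch * ch x)"
    using assms(1) by (rule Fspan_elim)
  have "(\<lambda>x. cnj (f x)) = (\<lambda>x. \<Sum>ch\<in>S. cnj (c ch) * cnj (ch x))"
    by (auto simp: S)
  also have "\<dots> \<in> Fspan"
    using S by (intro Fspan_sum Fspan_scale char_Fspan char_cnj) auto
  finally show ?thesis .
qed

lemma cont_bounded:
  assumes "compact (UNIV :: 'g::topological_space set)" "continuous_on UNIV (f :: 'g \<Rightarrow> complex)"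
  shows "\<exists>C. \<forall>g. cmod (f g) \<le> C"
proof -
  have "compact (range f)" using compact_continuous_image[OF assms(2,1)] .
  then have "bounded (range f)" by (rule compact_imp_bounded)
  then obtain C where "\<forall>y\<in>range f. norm y \<le> C" unfolding bounded_iff by blast
  then show ?thesis by blast
qed

lemma
  assumes "is_F_derivation d"
  shows d_CG: "f \<in> Fspan \<Longrightarrow> continuous_on UNIV (d f)"
    and d_add: "f \<in> Fspan \<Longrightarrow> g \<in> Fspan \<Longrightarrow> d (\<lambda>x. f x + g x) = (\<lambda>x. d f x + d g x)"
    and d_scale: "f \<in> Fspan \<Longrightarrow> d (\<lambda>x. c * f x) = (\<lambda>x. c * d f x)"
    and d_mult: "f \<in> Fspan \<Longrightarrow> g \<in> Fspan \<Longrightarrow> d (\<lambda>x. f x * g x) = (\<lambda>x. d f x * g x + f x * d g x)"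
  using assms unfolding is_F_derivation_def CG_def by auto

lemma d_zero: assumes "is_F_derivation d" shows "d (\<lambda>_. 0) = (\<lambda>_. 0)"
  using d_scale[OF assms Fspan_zero, of 0] by simp

lemma d_one: assumes "is_F_derivation d" shows "d (\<lambda>_. 1) = (\<lambda>_. 0)"
proof -
  have "d (\<lambda>_. 1) = (\<lambda>x. d (\<lambda>_. 1) x * 1 + 1 * d (\<lambda>_. 1) x)"
    using d_mult[OF assms char_Fspan[OF one_char] char_Fspan[OF one_char]] by simp
  then have "d (\<lambda>_. 1) x = d (\<lambda>_. 1) x + d (\<lambda>_. 1) x" for x
    by (metis (no_types, lifting) mult_1_left mult_1_right)
  then have "d (\<lambda>_. 1) x = 0" for x by (metis add_cancel_left_right)
  then show ?thesis by (intro ext)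
qed

lemma d_shift:
  assumes "is_F_derivation d"
    and hyp: "\<forall>f\<in>Fspan. (d f) \<circ> (\<lambda>x. x + x1) = d (f \<circ> (\<lambda>x. x + x1))"
  shows "\<forall>h\<in>Fspan. d (\<lambda>g. h (g + intmul j x1)) = (\<lambda>g. d h (g + intmul j x1))"
proof (induction j rule: int_induct[where k=0])
  case base then show ?case by simp
next
  case (step1 i)
  show ?case
  proof
    fix h :: "'a \<Rightarrow> complex" assume h: "h \<in> Fspan"
    let ?h' = "\<lambda>g. h (g + intmul i x1)"
    have h': "?h' \<in> Fspan" using h by (rule Fspan_shift)
    have s: "\<And>g. g + intmul (i+1) x1 = (g + x1) + intmul i x1"
      using intmul_succ[of i x1] by (simp add: add.assoc add.commute add.left_commute)
    have "(\<lambda>g. h (g + intmul (i+1) x1)) = ?h' \<circ> (\<lambda>x. x + x1)"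
      by (rule ext) (simp only: s o_def)
    then have "d (\<lambda>g. h (g + intmul (i+1) x1)) = d ?h' \<circ> (\<lambda>x. x + x1)"
      using hyp h' by simp
    also have "\<dots> = (\<lambda>g. d h (g + intmul (i+1) x1))"
      using step1 h by (simp only: s o_def)
    finally show "d (\<lambda>g. h (g + intmul (i+1) x1)) = (\<lambda>g. d h (g + intmul (i+1) x1))" .
  qed
next
  case (step2 i)
  show ?case
  proof
    fix h :: "'a \<Rightarrow> complex" assume h: "h \<in> Fspan"
    let ?h0 = "\<lambda>g. h (g + intmul (i - 1) x1)"
    have h0: "?h0 \<in> Fspan" using h by (rule Fspan_shift)
    have s: "\<And>g. g + intmul i x1 = (g + x1) + intmul (i - 1) x1"
      using intmul_succ[of "i - 1" x1] by (simp add: add.assoc add.commute add.left_commute)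
    have e: "?h0 \<circ> (\<lambda>x. x + x1) = (\<lambda>g. h (g + intmul i x1))"
      by (rule ext) (simp only: s o_def)
    have "d ?h0 \<circ> (\<lambda>x. x + x1) = d (?h0 \<circ> (\<lambda>x. x + x1))"
      using hyp h0 by blast
    also have "\<dots> = d (\<lambda>g. h (g + intmul i x1))" by (simp only: e)
    also have "\<dots> = (\<lambda>g. d h (g + intmul i x1))" using step2 h by blast
    finally have e1: "d ?h0 \<circ> (\<lambda>x. x + x1) = (\<lambda>g. d h (g + intmul i x1))" .
    have e2: "d ?h0 (g + x1) = d h (g + intmul i x1)" for g
      using fun_cong[OF e1, of g] by (simp only: o_def)
    show "d ?h0 = (\<lambda>g. d h (g + intmul (i - 1) x1))"
    proof
      fix g
      have "d ?h0 g = d ?h0 ((g - x1) + x1)" by simp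
      also have "\<dots> = d h ((g - x1) + intmul i x1)" by (rule e2)
      also have "(g - x1) + intmul i x1 = g + intmul (i - 1) x1"
        using s[of "g - x1"] by simp
      finally show "d ?h0 g = d h (g + intmul (i - 1) x1)" .
    qed
  qed
qed


definition validL :: "(('g::topological_ab_group_add \<Rightarrow> complex) \<times> int) list \<Rightarrow> bool" where
  "validL L \<longleftrightarrow> (\<forall>p\<in>set L. fst p \<in> Fspan)"

definition contL :: "(('g::topological_space \<Rightarrow> complex) \<times> int) list \<Rightarrow> bool" where
  "contL L \<longleftrightarrow> (\<forall>p\<in>set L. continuous_on UNIV (fst p))"

lemma validL_Nil[simp]: "validL []" by (simp add: validL_def)
lemma validL_Cons[simp]: "validL ((f,n)#L) \<longleftrightarrow> f \<in> Fspan \<and> validL L" by (simp add: validL_def)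
lemma validL_append[simp]: "validL (L1 @ L2) \<longleftrightarrow> validL L1 \<and> validL L2" by (auto simp add: validL_def)
lemma contL_Nil[simp]: "contL []" by (simp add: contL_def)
lemma contL_Cons[simp]: "contL ((f,n)#L) \<longleftrightarrow> continuous_on UNIV f \<and> contL L" by (simp add: contL_def)
lemma contL_append[simp]: "contL (L1 @ L2) \<longleftrightarrow> contL L1 \<and> contL L2" by (auto simp add: contL_def)

lemma validL_contL: "validL L \<Longrightarrow> contL L"
  by (induction L) (auto simp: Fspan_cont)

lemma contL_okL: "compact (UNIV :: 'g::topological_space set) \<Longrightarrow> contL (L :: (('g \<Rightarrow> complex) \<times> int) list) \<Longrightarrow> okL L"
  by (induction L) (auto simp: cont_bounded)

lemma validL_scL: "validL L \<Longrightarrow> validL (scL c L)"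
  by (induction L) (auto simp: Fspan_scale)

lemma contL_scL: "contL L \<Longrightarrow> contL (scL c L)"
  by (induction L) (auto intro!: continuous_intros)

lemma validL_mulL: "validL L1 \<Longrightarrow> validL L2 \<Longrightarrow> validL (mulL x1 L1 L2)"
proof (induction L1)
  case (Cons p L1)
  obtain f n where p: "p = (f,n)" by fastforce
  have f: "f \<in> Fspan" using Cons by (simp add: p)
  have "validL (map (\<lambda>(h,m). (\<lambda>g. f g * h (g - intmul n x1), n + m)) L2)"
    using Cons.prems(2)
  proof (induction L2)
    case (Cons q L2)
    obtain h m where q: "q = (h,m)" by fastforce
    have "(\<lambda>g. h (g + - intmul n x1)) \<in> Fspan" using Cons by (intro Fspan_shift) (simp add: q)
    then have "(\<lambda>g. f g * h (g - intmul n x1)) \<in> Fspan" using f by (simp add: Fspan_mult)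
    then show ?case using Cons by (simp add: q)
  qed simp
  then show ?case using Cons by (simp add: p)
qed simp

lemma contL_mulL:
  fixes x1 :: "'g::topological_ab_group_add"
  shows "contL L1 \<Longrightarrow> contL L2 \<Longrightarrow> contL (mulL x1 L1 L2)"
proof (induction L1)
  case (Cons p L1)
  obtain f n where p: "p = (f,n)" by fastforce
  have f: "continuous_on UNIV f" using Cons by (simp add: p)
  have "contL (map (\<lambda>(h,m). (\<lambda>g. f g * h (g - intmul n x1), n + m)) L2)"
    using Cons.prems(2)
  proof (induction L2)
    case (Cons q L2)
    obtain h m where q: "q = (h,m)" by fastforce
    have h: "continuous_on UNIV h" using Cons by (simp add: q)
    have "continuous_on UNIV (\<lambda>g. h (g - intmul n x1))"
      by (rule continuous_on_compose2[OF h]) (auto intro!: continuous_intros)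
    then have "continuous_on UNIV (\<lambda>g. f g * h (g - intmul n x1))" using f by (intro continuous_intros)
    then show ?case using Cons by (simp add: q)
  qed simp
  then show ?case using Cons by (simp add: p)
qed simp

lemma validL_adjL: "validL L \<Longrightarrow> validL (adjL x1 L)"
proof (induction L)
  case (Cons p L)
  obtain f n where p: "p = (f,n)" by fastforce
  have "(\<lambda>g. f (g + intmul n x1)) \<in> Fspan" using Cons by (intro Fspan_shift) (simp add: p)
  then have "(\<lambda>g. cnj (f (g + intmul n x1))) \<in> Fspan" by (rule Fspan_cnj)
  then show ?case using Cons by (simp add: p)
qed simp

section \<open>Coefficients and well-definedness\<close>

fun coef :: "(('g \<Rightarrow> complex) \<times> int) list \<Rightarrow> int \<Rightarrow> 'g \<Rightarrow> complex" where
  "coef [] n = (\<lambda>_. 0)"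
| "coef ((f,m)#L) n = (\<lambda>g. (if m = n then f g else 0) + coef L n g)"

lemma ev_coef:
  assumes "finite N" "snd ` set L \<subseteq> N"
  shows "ev x1 L x k = (\<Sum>n\<in>N. coef L n (intmul k x1) * Rep_ell2 x (k - n))"
  using assms(2)
proof (induction L)
  case Nil then show ?case by simp
next
  case (Cons p L)
  obtain f m where p: "p = (f,m)" by fastforce
  have mN: "m \<in> N" using Cons.prems by (simp add: p)
  have IH: "ev x1 L x k = (\<Sum>n\<in>N. coef L n (intmul k x1) * Rep_ell2 x (k - n))"
    using Cons by auto
  have "(\<Sum>n\<in>N. coef (p#L) n (intmul k x1) * Rep_ell2 x (k - n))
      = (\<Sum>n\<in>N. (if m = n then f (intmul k x1) * Rep_ell2 x (k - n) else 0))
        + (\<Sum>n\<in>N. coef L n (intmul k x1) * Rep_ell2 x (k - n))"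
    unfolding sum.distrib[symmetric] by (rule sum.cong) (simp_all add: p distrib_right)
  also have "(\<Sum>n\<in>N. (if m = n then f (intmul k x1) * Rep_ell2 x (k - n) else 0))
      = f (intmul k x1) * Rep_ell2 x (k - m)"
    using mN assms(1) by (simp add: sum.delta)
  finally show ?case by (simp add: p IH)
qed

lemma ev_evec: "ev x1 L (evec l) k = coef L (k - l) (intmul k x1)"
proof (induction L)
  case (Cons p L) then show ?case by (cases p) (auto simp: Rep_evec)
qed simp

lemma coef_cont: "contL L \<Longrightarrow> continuous_on UNIV (coef L n)"
proof (induction L n rule: coef.induct)
  case (2 f m L n) then show ?case by (cases "m = n") (auto intro!: continuous_intros)
qed simp

lemma coef_Fspan: "validL L \<Longrightarrow> coef L n \<in> Fspan"
proof (induction L n rule: coef.induct)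
  case (1 n) then show ?case by (simp add: Fspan_zero)
next
  case (2 f m L n)
  then show ?case
    by (cases "m = n") (simp_all add: Fspan_add)
qed

lemma dense_zero:
  assumes dense: "closure (range (\<lambda>n::int. intmul n x1)) = UNIV"
    and cont: "continuous_on UNIV (h :: 'g::{topological_ab_group_add} \<Rightarrow> complex)"
    and z: "\<And>k. h (intmul k x1) = 0"
  shows "h = (\<lambda>_. 0)"
proof -
  have cl: "closed {x \<in> UNIV. h x = 0}"
    by (rule continuous_closed_preimage_constant[OF cont]) simp
  have "range (\<lambda>n::int. intmul n x1) \<subseteq> {x \<in> UNIV. h x = 0}" using z by auto
  then have "closure (range (\<lambda>n::int. intmul n x1)) \<subseteq> {x \<in> UNIV. h x = 0}"
    by (rule closure_minimal[OF _ cl])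
  then show ?thesis using dense by (auto intro!: ext)
qed

lemma coef_unique:
  fixes x1 :: "'g::topological_ab_group_add"
  assumes dense: "closure (range (\<lambda>n::int. intmul n x1)) = UNIV"
    and ok: "okL L1" "okL L2" and c: "contL L1" "contL L2"
    and eq: "sumop x1 L1 = sumop x1 L2"
  shows "coef L1 n = coef L2 n"
proof -
  have "\<And>k. coef L1 n (intmul k x1) = coef L2 n (intmul k x1)"
  proof -
    fix k
    have "Rep_ell2 (sumop x1 L1 (evec (k - n))) k = Rep_ell2 (sumop x1 L2 (evec (k - n))) k"
      using eq by simp
    then show "coef L1 n (intmul k x1) = coef L2 n (intmul k x1)"
      by (simp add: Rep_sumop ok ev_evec)
  qed
  then have "(\<lambda>g. coef L1 n g - coef L2 n g) = (\<lambda>_. 0)"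
    by (intro dense_zero[OF dense]) (auto intro!: continuous_intros coef_cont c)
  then show ?thesis by (metis (no_types, lifting) eq_iff_diff_eq_0 ext)
qed

definition dL :: "(('g \<Rightarrow> complex) \<Rightarrow> ('g \<Rightarrow> complex)) \<Rightarrow> (('g \<Rightarrow> complex) \<times> int) list \<Rightarrow> (('g \<Rightarrow> complex) \<times> int) list" where
  "dL d L = map (\<lambda>(f,n). (d f, n)) L"

lemma dL_simps[simp]: "dL d [] = []" "dL d ((f,n)#L) = (d f, n) # dL d L" "dL d (L1 @ L2) = dL d L1 @ dL d L2"
  by (simp_all add: dL_def)

lemma snd_dL[simp]: "snd ` set (dL d L) = snd ` set L"
  unfolding dL_def set_map image_image by (simp add: case_prod_beta)

lemma contL_dL: "is_F_derivation d \<Longrightarrow> validL L \<Longrightarrow> contL (dL d L)"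
  by (induction L) (auto simp: d_CG)

lemma coef_dL: "is_F_derivation d \<Longrightarrow> validL L \<Longrightarrow> coef (dL d L) n = d (coef L n)"
proof (induction L n rule: coef.induct)
  case (1 n) then show ?case by (simp add: d_zero)
next
  case (2 f m L n)
  then have IH: "coef (dL d L) n = d (coef L n)" and f: "f \<in> Fspan" and cL: "coef L n \<in> Fspan"
    by (auto simp: coef_Fspan)
  show ?case
  proof (cases "m = n")
    case True
    then show ?thesis using d_add[OF 2(2) f cL] IH by simp
  next
    case False
    then show ?thesis using IH by simp
  qed
qed

lemma welldef:
  assumes cpt: "compact (UNIV :: 'g::topological_ab_group_add set)"
    and dense: "closure (range (\<lambda>n::int. intmul n x1)) = UNIV"
    and dd: "is_F_derivation d"
    and v: "validL L1" "validL (L2 :: (('g \<Rightarrow> complex) \<times> int) list)"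
    and eq: "sumop x1 L1 = sumop x1 L2"
  shows "sumop x1 (dL d L1) = sumop x1 (dL d L2)"
proof -
  have c: "contL L1" "contL L2" using v by (auto simp: validL_contL)
  have ok: "okL L1" "okL L2" using c by (auto simp: contL_okL[OF cpt])
  have cd: "contL (dL d L1)" "contL (dL d L2)" using v by (auto simp: contL_dL[OF dd])
  have okd: "okL (dL d L1)" "okL (dL d L2)" using cd by (auto simp: contL_okL[OF cpt])
  have ce: "coef L1 n = coef L2 n" for n by (rule coef_unique[OF dense ok c eq])
  let ?N = "snd ` set L1 \<union> snd ` set L2"
  have fin: "finite ?N" by simp
  show ?thesis
  proof (rule sumop_eqI[OF okd])
    fix x k
    show "ev x1 (dL d L1) x k = ev x1 (dL d L2) x k"
      by (subst ev_coef[OF fin], simp, subst ev_coef[OF fin], simp)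
         (simp add: coef_dL[OF dd v(1)] coef_dL[OF dd v(2)] ce)
  qed
qed

definition delta :: "'g::topological_ab_group_add \<Rightarrow> (('g \<Rightarrow> complex) \<Rightarrow> ('g \<Rightarrow> complex)) \<Rightarrow> op \<Rightarrow> op" where
  "delta x1 d T = (if \<exists>L. validL L \<and> T = sumop x1 L
     then sumop x1 (dL d (SOME L. validL L \<and> T = sumop x1 L)) else op_zero)"

lemma delta_sumop:
  assumes cpt: "compact (UNIV :: 'g::topological_ab_group_add set)"
    and dense: "closure (range (\<lambda>n::int. intmul n x1)) = UNIV"
    and dd: "is_F_derivation d"
    and v: "validL (L :: (('g \<Rightarrow> complex) \<times> int) list)"
  shows "delta x1 d (sumop x1 L) = sumop x1 (dL d L)"
proof -
  have ex: "\<exists>L'. validL L' \<and> sumop x1 L = sumop x1 L'" using v by blast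
  let ?L = "SOME L'. validL L' \<and> sumop x1 L = sumop x1 L'"
  have "validL ?L \<and> sumop x1 L = sumop x1 ?L" using someI_ex[OF ex] .
  then have "sumop x1 (dL d ?L) = sumop x1 (dL d L)"
    using welldef[OF cpt dense dd, of ?L L] v by metis
  then show ?thesis using ex unfolding delta_def by simp
qed


definition Vp :: "'g::ab_group_add \<Rightarrow> int \<Rightarrow> op" where
  "Vp x1 n = sumop x1 [(\<lambda>_. 1, n)]"

lemma okL_const[simp]: "okL [(\<lambda>_. 1, n)]"
  by (simp, rule exI[of _ 1]) simp

lemma okL_single: "(\<And>g. cmod (f g) \<le> C) \<Longrightarrow> okL [(f,n)]"
  by (simp add: okL_def) blast

lemma Vp_succ: "op_mult Vop (Vp x1 n) = Vp x1 (n + 1)"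
proof -
  have "op_mult Vop (Vp x1 n) = sumop x1 (mulL x1 [(\<lambda>_. 1, 1)] [(\<lambda>_. 1, n)])"
    unfolding Vp_def Vop_sumop[of x1] by (rule sumop_mult[OF okL_const okL_const])
  also have "\<dots> = Vp x1 (n + 1)"
    unfolding Vp_def by (rule sumop_eqI[OF okL_mulL[OF okL_const okL_const] okL_const]) (simp add: algebra_simps)
  finally show ?thesis .
qed

lemma Vp_pred: "op_mult Vinv (Vp x1 n) = Vp x1 (n - 1)"
proof -
  have "op_mult Vinv (Vp x1 n) = sumop x1 (mulL x1 [(\<lambda>_. 1, -1)] [(\<lambda>_. 1, n)])"
    unfolding Vp_def Vinv_sumop[of x1] by (rule sumop_mult[OF okL_const okL_const])
  also have "\<dots> = Vp x1 (n - 1)"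
    unfolding Vp_def by (rule sumop_eqI[OF okL_mulL[OF okL_const okL_const] okL_const]) (simp add: algebra_simps)
  finally show ?thesis .
qed

lemma Vp_0: "op_mult Vop Vinv = Vp x1 0"
proof -
  have "op_mult Vop Vinv = sumop x1 (mulL x1 [(\<lambda>_. 1, 1)] [(\<lambda>_. 1, -1)])"
    unfolding Vinv_sumop[of x1] Vop_sumop[of x1] by (rule sumop_mult[OF okL_const okL_const])
  also have "\<dots> = Vp x1 0"
    unfolding Vp_def by (rule sumop_eqI[OF okL_mulL[OF okL_const okL_const] okL_const]) (simp add: algebra_simps)
  finally show ?thesis .
qed

lemma Vp_id: "Vp x1 0 = (\<lambda>x. x)"
proof
  fix x
  have "ev x1 [(\<lambda>_. 1, 0)] x = Rep_ell2 x" by (rule ext) simp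
  then show "Vp x1 0 x = x" by (simp add: Vp_def sumop_def Rep_ell2_inverse)
qed

lemma mon_eq: assumes "okL [(f,0)]" shows "op_mult (Mop x1 f) (Vp x1 n) = sumop x1 [(f,n)]"
proof -
  have ok: "okL [(f,n)]" using assms by simp
  have "op_mult (Mop x1 f) (Vp x1 n) = sumop x1 (mulL x1 [(f,0)] [(\<lambda>_. 1, n)])"
    unfolding Vp_def Mop_sumop by (rule sumop_mult[OF assms okL_const])
  also have "\<dots> = sumop x1 [(f,n)]"
    by (rule sumop_eqI[OF okL_mulL[OF assms okL_const] ok]) simp
  finally show ?thesis .
qed

lemma cons_eq: "okL [(f,n)] \<Longrightarrow> okL L \<Longrightarrow> sumop x1 ((f,n)#L) = op_add (sumop x1 [(f,n)]) (sumop x1 L)"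
  by (subst sumop_append) simp_all

lemma valid_okL: "compact (UNIV :: 'g::topological_ab_group_add set) \<Longrightarrow> validL (L :: (('g \<Rightarrow> complex) \<times> int) list) \<Longrightarrow> okL L"
  by (rule contL_okL) (simp_all add: validL_contL)

lemma Bcal_rep:
  fixes x1 :: "'g::topological_ab_group_add"
  assumes cpt: "compact (UNIV :: 'g set)"
    and b: "b \<in> Bcal x1"
  shows "\<exists>L. validL L \<and> b = sumop x1 L"
  using b unfolding Bcal_def
proof (induction rule: star_alg.induct)
  case (gen T)
  have one: "(\<lambda>_. 1) \<in> (Fspan :: ('g \<Rightarrow> complex) set)" by (rule char_Fspan[OF one_char])
  show ?case
  proof (cases "T = Vop")
    case True then show ?thesis using one Vop_sumop[of x1] by (intro exI[of _ "[(\<lambda>_. 1, 1)]"]) simp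
  next
    case F1: False
    show ?thesis
    proof (cases "T = Vinv")
      case True then show ?thesis using one Vinv_sumop[of x1] by (intro exI[of _ "[(\<lambda>_. 1, -1)]"]) simp
    next
      case False
      with F1 gen obtain ch where ch: "ch \<in> characters" "T = Mop x1 ch" by blast
      then show ?thesis using char_Fspan[OF ch(1)] Mop_sumop[of x1 ch]
        by (intro exI[of _ "[(ch, 0)]"]) simp
    qed
  qed
next
  case (add T1 T2)
  then obtain L1 L2 where L: "validL L1" "T1 = sumop x1 L1" "validL L2" "T2 = sumop x1 L2" by blast
  then show ?case using sumop_append[OF valid_okL[OF cpt L(1)] valid_okL[OF cpt L(3)], of x1]
    by (intro exI[of _ "L1 @ L2"]) simp
next
  case (scale T c)
  then obtain L where L: "validL L" "T = sumop x1 L" by blast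
  then show ?case using sumop_scale[OF valid_okL[OF cpt L(1)], of c x1] validL_scL[OF L(1), of c]
    by (intro exI[of _ "scL c L"]) simp
next
  case (mult T1 T2)
  then obtain L1 L2 where L: "validL L1" "T1 = sumop x1 L1" "validL L2" "T2 = sumop x1 L2" by blast
  then show ?case using sumop_mult[OF valid_okL[OF cpt L(1)] valid_okL[OF cpt L(3)], of x1]
      validL_mulL[OF L(1) L(3), of x1]
    by (intro exI[of _ "mulL x1 L1 L2"]) simp
next
  case (adj T)
  then obtain L where L: "validL L" "T = sumop x1 L" by blast
  then show ?case using op_adj_sumop[OF valid_okL[OF cpt L(1)], of x1] validL_adjL[OF L(1), of x1]
    by (intro exI[of _ "adjL x1 L"]) simp
qed

lemma dL_scL: "is_F_derivation d \<Longrightarrow> validL L \<Longrightarrow> dL d (scL c L) = scL c (dL d L)"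
  by (induction L) (auto simp: d_scale)

lemma d_shift':
  assumes "is_F_derivation d"
    and "\<forall>f\<in>Fspan. (d f) \<circ> (\<lambda>x. x + x1) = d (f \<circ> (\<lambda>x. x + x1))"
    and "h \<in> Fspan"
  shows "d (\<lambda>g. h (g - intmul n x1)) = (\<lambda>g. d h (g - intmul n x1))"
  using d_shift[OF assms(1,2), of "-n"] assms(3) by (simp add: intmul_minus)

lemma d_mul1:
  assumes "is_F_derivation d"
    and "\<forall>f\<in>Fspan. (d f) \<circ> (\<lambda>x. x + x1) = d (f \<circ> (\<lambda>x. x + x1))"
    and f: "f \<in> Fspan" and h: "h \<in> Fspan"
  shows "d (\<lambda>g. f g * h (g - intmul n x1)) = (\<lambda>g. d f g * h (g - intmul n x1) + f g * d h (g - intmul n x1))"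
proof -
  have hs: "(\<lambda>g. h (g - intmul n x1)) \<in> Fspan" using Fspan_shift[OF h, of "- intmul n x1"] by simp
  show ?thesis using d_mult[OF assms(1) f hs] d_shift'[OF assms(1,2) h, of n] by simp
qed

lemma ev_dmulL:
  assumes dd: "is_F_derivation d"
    and hyp: "\<forall>f\<in>Fspan. (d f) \<circ> (\<lambda>x. x + x1) = d (f \<circ> (\<lambda>x. x + x1))"
    and v: "validL L1" "validL L2"
  shows "ev x1 (dL d (mulL x1 L1 L2)) x k = ev x1 (mulL x1 (dL d L1) L2) x k + ev x1 (mulL x1 L1 (dL d L2)) x k"
  using v(1)
proof (induction L1)
  case Nil then show ?case by simp
next
  case (Cons p L1)
  obtain f n where p: "p = (f,n)" by fastforce
  have f: "f \<in> Fspan" and vL1: "validL L1" using Cons by (auto simp: p)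
  have inner: "ev x1 (dL d (map (\<lambda>(h,m). (\<lambda>g. f g * h (g - intmul n x1), n + m)) L2)) x k
     = ev x1 (map (\<lambda>(h,m). (\<lambda>g. d f g * h (g - intmul n x1), n + m)) L2) x k
     + ev x1 (map (\<lambda>(h,m). (\<lambda>g. f g * h (g - intmul n x1), n + m)) (dL d L2)) x k"
    using v(2)
  proof (induction L2)
    case Nil then show ?case by simp
  next
    case (Cons q L2)
    obtain h m where q: "q = (h,m)" by fastforce
    have h: "h \<in> Fspan" and vL2: "validL L2" using Cons by (auto simp: q)
    show ?case using Cons.IH[OF vL2] d_mul1[OF dd hyp f h, of n]
      by (simp add: q algebra_simps)
  qed
  show ?case using Cons.IH[OF vL1] inner by (simp add: p algebra_simps)
qed

context
  fixes x1 :: "'g::topological_ab_group_add" and d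
  assumes cpt: "compact (UNIV :: 'g set)"
    and dense: "closure (range (\<lambda>n::int. intmul n x1)) = UNIV"
    and dd: "is_F_derivation d"
    and hyp: "\<forall>f\<in>Fspan. (d f) \<circ> (\<lambda>x. x + x1) = d (f \<circ> (\<lambda>x. x + x1))"
begin

lemma okd: "validL L \<Longrightarrow> okL (dL d L)"
  by (rule contL_okL[OF cpt], rule contL_dL[OF dd])

lemma dsum: "validL L \<Longrightarrow> delta x1 d (sumop x1 L) = sumop x1 (dL d L)"
  by (rule delta_sumop[OF cpt dense dd])

lemma delta_add: "validL L1 \<Longrightarrow> validL L2 \<Longrightarrow>
  delta x1 d (op_add (sumop x1 L1) (sumop x1 L2)) = op_add (delta x1 d (sumop x1 L1)) (delta x1 d (sumop x1 L2))"
  by (simp add: sumop_append valid_okL[OF cpt] dsum okd)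

lemma delta_scale: "validL L \<Longrightarrow>
  delta x1 d (op_scale c (sumop x1 L)) = op_scale c (delta x1 d (sumop x1 L))"
  by (simp add: sumop_scale valid_okL[OF cpt] dsum okd validL_scL dL_scL[OF dd])

lemma delta_mult: "validL L1 \<Longrightarrow> validL L2 \<Longrightarrow>
  delta x1 d (op_mult (sumop x1 L1) (sumop x1 L2)) =
    op_add (op_mult (delta x1 d (sumop x1 L1)) (sumop x1 L2)) (op_mult (sumop x1 L1) (delta x1 d (sumop x1 L2)))"
  apply (simp add: sumop_mult valid_okL[OF cpt] dsum okd validL_mulL)
  apply (subst sumop_append)
    apply (simp_all add: okL_mulL valid_okL[OF cpt] okd)
  apply (rule sumop_eqI)
    apply (simp_all add: okL_mulL valid_okL[OF cpt] okd validL_mulL ev_dmulL[OF dd hyp])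
  done

end


section \<open>Boundedness and membership in B\<close>

lemma ev_plus_x: "okL L \<Longrightarrow> ev x1 L (x + y) k = ev x1 L x k + ev x1 L y k"
proof (induction L)
  case (Cons p L) then show ?case by (cases p) (simp add: Rep_plus algebra_simps)
qed simp

lemma ev_scale_x: "ev x1 L (l2scale c x) k = c * ev x1 L x k"
proof (induction L)
  case (Cons p L) then show ?case by (cases p) (simp add: Rep_scale algebra_simps)
qed simp

definition Q :: "(int \<Rightarrow> complex) \<Rightarrow> real" where
  "Q v = infsum (\<lambda>n. (cmod (v n))\<^sup>2) UNIV"

lemma Q_nonneg: "0 \<le> Q v" unfolding Q_def by (rule infsum_nonneg) simp

lemma sq_pt: "(cmod (a + b))\<^sup>2 \<le> 2 * (cmod a)\<^sup>2 + 2 * (cmod b)\<^sup>2"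
proof -
  have "cmod (a + b) \<le> cmod a + cmod b" by (rule norm_triangle_ineq)
  then have "(cmod (a + b))\<^sup>2 \<le> (cmod a + cmod b)\<^sup>2" by (simp add: power_mono)
  also have "\<dots> \<le> 2 * (cmod a)\<^sup>2 + 2 * (cmod b)\<^sup>2"
    using zero_le_power2[of "cmod a - cmod b"] unfolding power2_sum power2_diff by linarith
  finally show ?thesis .
qed

lemma Q_add: assumes "sq u" "sq v" shows "Q (\<lambda>n. u n + v n) \<le> 2 * Q u + 2 * Q v"
proof -
  have s1: "(\<lambda>n. 2 * (cmod (u n))\<^sup>2) summable_on UNIV" "(\<lambda>n. 2 * (cmod (v n))\<^sup>2) summable_on UNIV"
    using assms unfolding sq_def by (auto intro: summable_on_cmult_right)
  have "Q (\<lambda>n. u n + v n) \<le> infsum (\<lambda>n. 2 * (cmod (u n))\<^sup>2 + 2 * (cmod (v n))\<^sup>2) UNIV"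
    unfolding Q_def
    by (rule infsum_mono) (use sq_add[OF assms] s1 in \<open>auto simp: sq_def sq_pt intro: summable_on_add\<close>)
  also have "\<dots> = 2 * Q u + 2 * Q v"
    unfolding Q_def using assms unfolding sq_def
    by (simp add: infsum_add s1 infsum_cmult_right)
  finally show ?thesis .
qed

lemma Q_bshift: assumes "\<And>k. cmod (a k) \<le> C"
  shows "Q (\<lambda>k. a k * Rep_ell2 x (k - n)) \<le> C\<^sup>2 * Q (Rep_ell2 x)"
proof -
  have s: "(\<lambda>k. (cmod (Rep_ell2 x (k - n)))\<^sup>2) summable_on UNIV"
    using sq_shift[OF sq_Rep, of x n] by (simp add: sq_def)
  have "Q (\<lambda>k. a k * Rep_ell2 x (k - n)) \<le> infsum (\<lambda>k. C\<^sup>2 * (cmod (Rep_ell2 x (k - n)))\<^sup>2) UNIV"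
    unfolding Q_def
  proof (rule infsum_mono)
    show "(\<lambda>k. (cmod (a k * Rep_ell2 x (k - n)))\<^sup>2) summable_on UNIV"
      using sq_bmult[OF sq_shift[OF sq_Rep[of x], of n] assms] by (simp add: sq_def)
    show "(\<lambda>k. C\<^sup>2 * (cmod (Rep_ell2 x (k - n)))\<^sup>2) summable_on UNIV"
      using s by (rule summable_on_cmult_right)
    fix k
    have "(cmod (a k))\<^sup>2 \<le> C\<^sup>2" using assms[of k] by (simp add: power_mono)
    then show "(cmod (a k * Rep_ell2 x (k - n)))\<^sup>2 \<le> C\<^sup>2 * (cmod (Rep_ell2 x (k - n)))\<^sup>2"
      by (simp add: norm_mult power_mult_distrib mult_right_mono)
  qed
  also have "\<dots> = C\<^sup>2 * infsum (\<lambda>k. (cmod (Rep_ell2 x (k - n)))\<^sup>2) UNIV"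
    by (rule infsum_cmult_right) (rule s)
  also have "\<dots> = C\<^sup>2 * Q (Rep_ell2 x)"
    unfolding Q_def using infsum_shift[of "\<lambda>k. (cmod (Rep_ell2 x k))\<^sup>2" n] by simp
  finally show ?thesis .
qed


lemma Qbound: "okL L \<Longrightarrow> \<exists>K\<ge>0. \<forall>x. Q (ev x1 L x) \<le> K * Q (Rep_ell2 x)"
proof (induction L)
  case Nil then show ?case by (intro exI[of _ 0]) (simp add: Q_def)
next
  case (Cons p L)
  obtain f n where p: "p = (f,n)" by fastforce
  from Cons obtain C where C: "\<And>g. cmod (f g) \<le> C" by (auto simp: p)
  from Cons obtain K where K: "K \<ge> 0" "\<And>x. Q (ev x1 L x) \<le> K * Q (Rep_ell2 x)" by (auto simp: p)
  have okL: "okL L" using Cons by (simp add: p)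
  show ?case
  proof (intro exI[of _ "2 * C\<^sup>2 + 2 * K"] conjI allI)
    show "0 \<le> 2 * C\<^sup>2 + 2 * K" using K by simp
    fix x
    have sq1: "sq (\<lambda>k. f (intmul k x1) * Rep_ell2 x (k - n))"
      by (rule sq_bmult[OF sq_shift[OF sq_Rep] C])
    have "ev x1 (p#L) x = (\<lambda>k. f (intmul k x1) * Rep_ell2 x (k - n) + ev x1 L x k)"
      by (rule ext) (simp add: p)
    then have "Q (ev x1 (p#L) x) \<le> 2 * Q (\<lambda>k. f (intmul k x1) * Rep_ell2 x (k - n)) + 2 * Q (ev x1 L x)"
      using Q_add[OF sq1 sq_ev[OF okL]] by simp
    also have "\<dots> \<le> 2 * (C\<^sup>2 * Q (Rep_ell2 x)) + 2 * (K * Q (Rep_ell2 x))"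
      using Q_bshift[of "\<lambda>k. f (intmul k x1)" C x n] C K(2)[of x] by simp
    also have "\<dots> = (2 * C\<^sup>2 + 2 * K) * Q (Rep_ell2 x)" by (simp add: algebra_simps)
    finally show "Q (ev x1 (p#L) x) \<le> (2 * C\<^sup>2 + 2 * K) * Q (Rep_ell2 x)" .
  qed
qed

lemma bounded_sumop: assumes ok: "okL L" shows "bounded_op (sumop x1 L)"
  unfolding bounded_op_def
proof (intro conjI allI)
  fix x y
  show "sumop x1 L (x + y) = sumop x1 L x + sumop x1 L y"
    by (rule ell2_eqI) (simp add: Rep_plus Rep_sumop ok ev_plus_x)
next
  fix c x
  show "sumop x1 L (l2scale c x) = l2scale c (sumop x1 L x)"
    by (rule ell2_eqI) (simp add: Rep_scale Rep_sumop ok ev_scale_x)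
next
  obtain K where K: "K \<ge> 0" "\<And>x. Q (ev x1 L x) \<le> K * Q (Rep_ell2 x)" using Qbound[OF ok] by blast
  show "\<exists>K. \<forall>x. l2norm (sumop x1 L x) \<le> K * l2norm x"
  proof (intro exI allI)
    fix x
    have "l2norm (sumop x1 L x) = sqrt (Q (ev x1 L x))"
      by (simp add: l2norm_def Q_def Rep_sumop ok)
    also have "\<dots> \<le> sqrt (K * Q (Rep_ell2 x))" using K(2) by simp
    also have "\<dots> = sqrt K * l2norm x" by (simp add: l2norm_def Q_def real_sqrt_mult)
    finally show "l2norm (sumop x1 L x) \<le> sqrt K * l2norm x" .
  qed
qed

lemma scale0_op: "op_scale 0 T = op_zero"
  by (rule ext) (simp add: op_scale_def op_zero_def l2scale_def zero_ell2_def)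

lemma zero_sumop_scale: "op_scale 0 Vop = sumop x1 []"
  by (simp add: scale0_op zero_sumop)

lemma Vinv_adj: "op_adj Vop = Vinv"
proof -
  have "op_adj Vop = sumop (0::int) (adjL 0 [(\<lambda>_. 1, 1)])"
    unfolding Vop_sumop[of "0::int"] by (rule op_adj_sumop[OF okL_const])
  also have "\<dots> = Vinv" by (simp add: Vinv_sumop[of "0::int"])
  finally show ?thesis .
qed

lemma Vp_star:
  assumes "Vop \<in> star_alg S" "Vinv \<in> star_alg S"
  shows "Vp x1 n \<in> star_alg S"
proof (induction n rule: int_induct[where k=0])
  case base
  then show ?case using star_alg.mult[OF assms] Vp_0[of x1] by simp
next
  case (step1 i)
  then show ?case using star_alg.mult[OF assms(1) step1(2)] Vp_succ[of x1 i] by simp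
next
  case (step2 i)
  then show ?case using star_alg.mult[OF assms(2) step2(2)] Vp_pred[of x1 i] by simp
qed

lemma sumop_star:
  fixes x1 :: "'g::topological_ab_group_add"
  assumes cpt: "compact (UNIV :: 'g set)"
  shows "contL L \<Longrightarrow> sumop x1 L \<in> star_alg ({Vop} \<union> {Mop x1 f | f. f \<in> CG})"
proof (induction L)
  let ?S = "{Vop} \<union> {Mop x1 f | f. f \<in> CG}"
  have V: "Vop \<in> star_alg ?S" by (rule star_alg.gen) simp
  case Nil
  show ?case using star_alg.scale[OF V, of 0] zero_sumop_scale[of x1] by simp
next
  let ?S = "{Vop} \<union> {Mop x1 f | f. f \<in> CG}"
  have V: "Vop \<in> star_alg ?S" by (rule star_alg.gen) simp
  have Vi: "Vinv \<in> star_alg ?S" using star_alg.adj[OF V] Vinv_adj by simp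
  case (Cons p L)
  obtain f n where p: "p = (f,n)" by fastforce
  have f: "continuous_on UNIV f" and cL: "contL L" using Cons by (auto simp: p)
  obtain C where C: "\<And>g. cmod (f g) \<le> C" using cont_bounded[OF cpt f] by blast
  have ok0: "okL [(f,0)]" and okn: "okL [(f,n)]" using C by (auto intro: okL_single)
  have okLL: "okL L" using contL_okL[OF cpt cL] .
  have M: "Mop x1 f \<in> star_alg ?S" by (rule star_alg.gen) (use f in \<open>auto simp: CG_def\<close>)
  have "sumop x1 [(f,n)] \<in> star_alg ?S"
    using star_alg.mult[OF M Vp_star[OF V Vi, of x1 n]] mon_eq[OF ok0, of x1 n] by simp
  then show ?case using star_alg.add[OF _ Cons.IH[OF cL]] cons_eq[OF okn okLL, of x1] by (simp add: p)
qed

lemma opnorm_self: "opnorm (op_diff T T) = 0"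
proof -
  have "op_diff T T = (\<lambda>x. 0)"
    by (rule ext, rule ell2_eqI) (simp add: op_diff_def Rep_minus Rep_zero)
  moreover have "l2norm 0 = 0" by (simp add: l2norm_def Rep_zero)
  moreover have "(0::ell2) \<in> {x. l2norm x \<le> 1}" using \<open>l2norm 0 = 0\<close> by simp
  then have "{x. l2norm x \<le> 1} \<noteq> {}" by blast
  ultimately show ?thesis unfolding opnorm_def by simp
qed

lemma sumop_Balg:
  fixes x1 :: "'g::topological_ab_group_add"
  assumes cpt: "compact (UNIV :: 'g set)" and c: "contL L"
  shows "sumop x1 L \<in> Balg x1"
  unfolding Balg_def cstar_alg_def
proof (intro CollectI conjI allI impI)
  show "bounded_op (sumop x1 L)" by (rule bounded_sumop[OF contL_okL[OF cpt c]])
  fix e :: real assume "e > 0"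
  then show "\<exists>A\<in>star_alg ({Vop} \<union> {Mop x1 f |f. f \<in> CG}). opnorm (op_diff (sumop x1 L) A) < e"
    by (intro bexI[of _ "sumop x1 L"]) (simp add: opnorm_self, rule sumop_star[OF cpt c])
qed


section \<open>Invariance\<close>

definition ee :: "real \<Rightarrow> int \<Rightarrow> complex" where
  "ee \<theta> l = exp (\<i> * complex_of_real (\<theta> * real_of_int l))"

lemma norm_ee[simp]: "cmod (ee \<theta> l) = 1" by (simp add: ee_def)

lemma Rep_expL: "Rep_ell2 (expL \<theta> x) = (\<lambda>l. ee \<theta> l * Rep_ell2 x l)"
  unfolding expL_def ee_def[symmetric] by (rule Rep_Abs, rule sq_bmult[OF sq_Rep, where C=1]) simp

lemma ee_comb: "ee \<theta> l * ee (-\<theta>) (l - n) = ee \<theta> n"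
  unfolding ee_def exp_add[symmetric] by (rule arg_cong[where f=exp]) (simp add: algebra_simps)

lemma ee_inv: "ee (-\<theta>) n * ee \<theta> n = 1"
  unfolding ee_def exp_add[symmetric] by (simp add: algebra_simps)

definition phL :: "real \<Rightarrow> (('g \<Rightarrow> complex) \<times> int) list \<Rightarrow> (('g \<Rightarrow> complex) \<times> int) list" where
  "phL \<theta> L = map (\<lambda>(f,n). (\<lambda>g. ee \<theta> n * f g, n)) L"

lemma phL_simps[simp]: "phL \<theta> [] = []" "phL \<theta> ((f,n)#L) = (\<lambda>g. ee \<theta> n * f g, n) # phL \<theta> L"
  by (simp_all add: phL_def)

lemma okL_phL: "okL L \<Longrightarrow> okL (phL \<theta> L)"
proof (induction L)
  case (Cons p L)
  obtain f n where p: "p = (f,n)" by fastforce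
  from Cons obtain C where C: "\<And>g. cmod (f g) \<le> C" by (auto simp: p)
  have "\<forall>g. cmod (ee \<theta> n * f g) \<le> C" using C by (simp add: norm_mult)
  then show ?case using Cons by (auto simp: p)
qed simp

lemma validL_phL: "validL L \<Longrightarrow> validL (phL \<theta> L)"
  by (induction L) (auto simp: Fspan_scale)

lemma dL_phL: "is_F_derivation d \<Longrightarrow> validL L \<Longrightarrow> dL d (phL \<theta> L) = phL \<theta> (dL d L)"
  by (induction L) (auto simp: d_scale)

lemma ev_conj: "ee \<theta> l * ev x1 L (expL (-\<theta>) x) l = ev x1 (phL \<theta> L) x l"
proof (induction L)
  case (Cons p L)
  obtain f n where p: "p = (f,n)" by fastforce
  have "ee \<theta> l * (f (intmul l x1) * (ee (-\<theta>) (l - n) * Rep_ell2 x (l - n)))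
      = (ee \<theta> l * ee (-\<theta>) (l - n)) * f (intmul l x1) * Rep_ell2 x (l - n)"
    by (simp add: algebra_simps)
  also have "\<dots> = ee \<theta> n * f (intmul l x1) * Rep_ell2 x (l - n)" by (simp only: ee_comb)
  finally have e: "ee \<theta> l * (f (intmul l x1) * (ee (-\<theta>) (l - n) * Rep_ell2 x (l - n)))
      = ee \<theta> n * f (intmul l x1) * Rep_ell2 x (l - n)" .
  show ?case using Cons.IH e by (simp add: p Rep_expL distrib_left)
qed simp

lemma conj_sumop:
  assumes ok: "okL L"
  shows "op_mult (op_mult (expL \<theta>) (sumop x1 L)) (expL (-\<theta>)) = sumop x1 (phL \<theta> L)"
proof (rule ext)
  fix x
  have "Rep_ell2 (expL \<theta> (sumop x1 L (expL (-\<theta>) x))) = Rep_ell2 (sumop x1 (phL \<theta> L) x)"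
    by (rule ext) (simp add: Rep_expL Rep_sumop ok okL_phL ev_conj)
  then show "op_mult (op_mult (expL \<theta>) (sumop x1 L)) (expL (-\<theta>)) x = sumop x1 (phL \<theta> L) x"
    by (simp add: op_mult_def Rep_ell2_inject)
qed

lemma phL_phL: "okL L \<Longrightarrow> sumop x1 (phL (-\<theta>) (phL \<theta> L)) = sumop x1 L"
proof (rule sumop_eqI)
  assume ok: "okL L"
  show "okL (phL (-\<theta>) (phL \<theta> L))" by (intro okL_phL ok)
  show "okL L" by (rule ok)
  fix x k
  show "ev x1 (phL (- \<theta>) (phL \<theta> L)) x k = ev x1 L x k"
  proof (induction L)
    case (Cons p L)
    obtain f n where p: "p = (f,n)" by fastforce
    have "ee (-\<theta>) n * (ee \<theta> n * f (intmul k x1)) = f (intmul k x1)"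
      using ee_inv[of \<theta> n] by (simp add: mult.assoc[symmetric])
    then show ?case using Cons by (simp add: p)
  qed simp
qed


section \<open>Uniqueness\<close>

lemma ell2_zero_plus[simp]: "0 + (a::ell2) = a"
  by (rule ell2_eqI) (simp add: Rep_plus Rep_zero)
lemma ell2_plus_zero[simp]: "(a::ell2) + 0 = a"
  by (rule ell2_eqI) (simp add: Rep_plus Rep_zero)
lemma ell2_double: "(a::ell2) = a + a \<Longrightarrow> a = 0"
proof -
  assume "a = a + a"
  then have "Rep_ell2 a n = Rep_ell2 a n + Rep_ell2 a n" for n by (metis Rep_plus)
  then show "a = 0" by (intro ell2_eqI) (simp add: Rep_zero)
qed
lemma Vop_zero[simp]: "Vop 0 = 0" by (simp add: Vop_def Rep_zero zero_ell2_def[symmetric])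
lemma Vinv_zero[simp]: "Vinv 0 = 0" by (simp add: Vinv_def Rep_zero zero_ell2_def[symmetric])
lemma Mop_zero[simp]: "Mop x1 f 0 = 0" by (simp add: Mop_def Rep_zero zero_ell2_def[symmetric])
lemma Vop_inj0: "Vop y = 0 \<Longrightarrow> y = 0"
proof -
  assume a: "Vop y = 0"
  have "Rep_ell2 (Vop y) = (\<lambda>l. Rep_ell2 y (l - 1))"
    unfolding Vop_def by (rule Rep_Abs, rule sq_shift, rule sq_Rep)
  then have "Rep_ell2 y (l + 1 - 1) = 0" for l using a by (metis Rep_zero)
  then show "y = 0" by (intro ell2_eqI) (simp add: Rep_zero)
qed

lemma Mop_add:
  assumes f: "okL [(f,0)]" and g: "okL [(g,0)]"
  shows "Mop x1 (\<lambda>x. f x + g x) = op_add (Mop x1 f) (Mop x1 g)"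
proof -
  obtain C D where C: "\<And>x. cmod (f x) \<le> C" and D: "\<And>x. cmod (g x) \<le> D" using f g by auto
  have fg: "okL [(\<lambda>x. f x + g x, 0)]"
    by (rule okL_single[where C="C + D"]) (rule order_trans[OF norm_triangle_ineq add_mono[OF C D]])
  have app: "op_add (sumop x1 [(f,0)]) (sumop x1 [(g,0)]) = sumop x1 ([(f,0)]@[(g,0)])"
    by (rule sumop_append[OF f g])
  have "sumop x1 [(\<lambda>x. f x + g x, 0)] = sumop x1 ([(f,0)]@[(g,0)])"
    by (rule sumop_eqI[OF fg]) (use f g in \<open>simp add: okL_def\<close>, simp add: algebra_simps)
  then show ?thesis unfolding Mop_sumop app by simp
qed

lemma Mop_scale: "okL [(f,0)] \<Longrightarrow> Mop x1 (\<lambda>x. c * f x) = op_scale c (Mop x1 f)"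
  unfolding Mop_sumop by (subst sumop_scale) simp_all

context
  fixes x1 :: "'g::topological_ab_group_add" and d
  assumes cpt: "compact (UNIV :: 'g set)"
    and dense: "closure (range (\<lambda>n::int. intmul n x1)) = UNIV"
    and dd: "is_F_derivation d"
    and hyp: "\<forall>f\<in>Fspan. (d f) \<circ> (\<lambda>x. x + x1) = d (f \<circ> (\<lambda>x. x + x1))"
begin

lemma B_V: "Vop \<in> Bcal x1" unfolding Bcal_def by (rule star_alg.gen) simp
lemma B_Vi: "Vinv \<in> Bcal x1" unfolding Bcal_def by (rule star_alg.gen) simp
lemma B_zero: "op_zero \<in> Bcal x1"
  using star_alg.scale[OF B_V[unfolded Bcal_def], of 0] scale0_op unfolding Bcal_def by simp
lemma B_Vp: "Vp x1 n \<in> Bcal x1"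
  unfolding Bcal_def by (rule Vp_star) (use B_V B_Vi in \<open>simp_all add: Bcal_def\<close>)

lemma okF: fixes f :: "'g \<Rightarrow> complex" assumes "f \<in> Fspan" shows "okL [(f, n)]"
proof -
  obtain C where "\<forall>g. cmod (f g) \<le> C" using cont_bounded[OF cpt Fspan_cont[OF assms]] by blast
  then show ?thesis by (intro okL_single[where C=C]) blast
qed

lemma B_Mop: assumes "f \<in> Fspan" shows "Mop x1 f \<in> Bcal x1"
proof -
  obtain S c where S: "finite S" "S \<subseteq> characters" "f = (\<lambda>x. \<Sum>ch\<in>S. c ch * ch x)"
    using assms by (rule Fspan_elim)
  have "S \<subseteq> characters \<longrightarrow> Mop x1 (\<lambda>x. \<Sum>ch\<in>S. c ch * ch x) \<in> Bcal x1"
    using S(1)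
  proof (induction S rule: finite_induct)
    case empty
    have "Mop x1 (\<lambda>x. \<Sum>ch\<in>{}. c ch * ch x) = op_zero"
      by (rule ext) (simp add: Mop_def op_zero_def zero_ell2_def)
    then show ?case using B_zero by simp
  next
    case (insert a S)
    show ?case
    proof
      assume sub: "insert a S \<subseteq> characters"
      then have a: "a \<in> characters" and Ssub: "S \<subseteq> characters" by auto
      have aF: "a \<in> Fspan" by (rule char_Fspan[OF a])
      have sF: "(\<lambda>x. \<Sum>ch\<in>S. c ch * ch x) \<in> Fspan"
        using Ssub insert.hyps(1) by (intro Fspan_sum Fspan_scale char_Fspan) auto
      have caF: "(\<lambda>x. c a * a x) \<in> Fspan" by (rule Fspan_scale[OF aF])
      have e: "(\<lambda>x. \<Sum>ch\<in>insert a S. c ch * ch x) = (\<lambda>x. c a * a x + (\<Sum>ch\<in>S. c ch * ch x))"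
        using insert.hyps by simp
      have "Mop x1 (\<lambda>x. \<Sum>ch\<in>insert a S. c ch * ch x)
          = op_add (op_scale (c a) (Mop x1 a)) (Mop x1 (\<lambda>x. \<Sum>ch\<in>S. c ch * ch x))"
        unfolding e by (simp only: Mop_add[OF okF[OF caF] okF[OF sF]] Mop_scale[OF okF[OF aF]])
      moreover have Ma: "Mop x1 a \<in> Bcal x1" unfolding Bcal_def by (rule star_alg.gen) (use a in blast)
      moreover have MS: "Mop x1 (\<lambda>x. \<Sum>ch\<in>S. c ch * ch x) \<in> Bcal x1" using insert.IH Ssub by blast
      ultimately show "Mop x1 (\<lambda>x. \<Sum>ch\<in>insert a S. c ch * ch x) \<in> Bcal x1"
        using star_alg.add[OF star_alg.scale[OF Ma[unfolded Bcal_def], of "c a"] MS[unfolded Bcal_def]]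
        unfolding Bcal_def by (simp only:)
    qed
  qed
  then show ?thesis using S by simp
qed

lemma B_mon: assumes f: "f \<in> Fspan" shows "sumop x1 [(f,n)] \<in> Bcal x1"
proof -
  have "op_mult (Mop x1 f) (Vp x1 n) \<in> Bcal x1"
    using star_alg.mult[OF B_Mop[OF f, unfolded Bcal_def] B_Vp[of n, unfolded Bcal_def]]
    unfolding Bcal_def .
  then show ?thesis by (simp only: mon_eq[OF okF[OF f]])
qed

lemma B_sumop: "validL L \<Longrightarrow> sumop x1 L \<in> Bcal x1"
proof (induction L)
  case Nil then show ?case using B_zero zero_sumop[of x1] by simp
next
  case (Cons p L)
  obtain f n where p: "p = (f,n)" by fastforce
  have f: "f \<in> Fspan" and v: "validL L" using Cons by (auto simp: p)
  show ?case
    using star_alg.add[OF B_mon[OF f, unfolded Bcal_def] Cons.IH[OF v, unfolded Bcal_def]]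
      cons_eq[OF okF[OF f] valid_okL[OF cpt v], of x1]
    unfolding Bcal_def by (simp add: p)
qed

lemma unique_der:
  assumes der: "is_B_derivation x1 \<delta>'" and dV: "\<delta>' Vop = op_zero"
    and dM: "\<forall>f\<in>Fspan. \<delta>' (Mop x1 f) = Mop x1 (d f)"
  shows "validL L \<Longrightarrow> \<delta>' (sumop x1 L) = sumop x1 (dL d L)"
proof -
  have dadd: "\<And>a b. a \<in> Bcal x1 \<Longrightarrow> b \<in> Bcal x1 \<Longrightarrow> \<delta>' (op_add a b) = op_add (\<delta>' a) (\<delta>' b)"
    and dmult: "\<And>a b. a \<in> Bcal x1 \<Longrightarrow> b \<in> Bcal x1 \<Longrightarrow> \<delta>' (op_mult a b) = op_add (op_mult (\<delta>' a) b) (op_mult a (\<delta>' b))"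
    and dscale: "\<And>a c. a \<in> Bcal x1 \<Longrightarrow> \<delta>' (op_scale c a) = op_scale c (\<delta>' a)"
    using der unfolding is_B_derivation_def by auto
  have d0: "\<delta>' op_zero = op_zero"
    using dscale[OF B_V, of 0] dV by (simp add: scale0_op)
  have Vp0: "op_mult (Vp x1 0) (Vp x1 0) = Vp x1 0" by (simp add: Vp_id op_mult_def o_def)
  have dId: "\<delta>' (Vp x1 0) = op_zero"
  proof (rule ext)
    fix x
    let ?D = "\<delta>' (Vp x1 0)"
    have eq: "?D = op_add (op_mult ?D (Vp x1 0)) (op_mult (Vp x1 0) ?D)"
      using dmult[OF B_Vp B_Vp, of 0 0] by (simp only: Vp0)
    have "?D x = ?D x + ?D x" using fun_cong[OF eq, of x] by (simp add: op_add_def op_mult_def Vp_id)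
    then show "?D x = op_zero x" by (simp add: op_zero_def ell2_double)
  qed
  have dVi: "\<delta>' Vinv = op_zero"
  proof (rule ext)
    fix x
    have eq: "op_zero = op_add (op_mult (\<delta>' Vop) Vinv) (op_mult Vop (\<delta>' Vinv))"
      using dmult[OF B_V B_Vi] Vp_0[of x1] dId by simp
    have "op_zero x = op_add (op_mult (\<delta>' Vop) Vinv) (op_mult Vop (\<delta>' Vinv)) x"
      by (rule fun_cong[OF eq])
    then have "Vop (\<delta>' Vinv x) = 0"
      by (simp add: dV op_add_def op_mult_def op_zero_def)
    then show "\<delta>' Vinv x = op_zero x" by (simp add: Vop_inj0 op_zero_def)
  qed
  have dVp: "\<delta>' (Vp x1 n) = op_zero" for n
  proof (induction n rule: int_induct[where k=0])
    case base then show ?case by (rule dId)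
  next
    case (step1 i)
    have "\<delta>' (Vp x1 (i+1)) = op_add (op_mult (\<delta>' Vop) (Vp x1 i)) (op_mult Vop (\<delta>' (Vp x1 i)))"
      using dmult[OF B_V B_Vp, of i] Vp_succ[of x1 i] by simp
    then show ?case using step1(2) dV by (simp add: op_add_def op_mult_def op_zero_def)
  next
    case (step2 i)
    have "\<delta>' (Vp x1 (i-1)) = op_add (op_mult (\<delta>' Vinv) (Vp x1 i)) (op_mult Vinv (\<delta>' (Vp x1 i)))"
      using dmult[OF B_Vi B_Vp, of i] Vp_pred[of x1 i] by simp
    then show ?case using step2(2) dVi by (simp add: op_add_def op_mult_def op_zero_def)
  qed
  have dmon: "\<delta>' (sumop x1 [(f,n)]) = sumop x1 [(d f, n)]" if f: "f \<in> Fspan" for f n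
  proof -
    obtain C where "\<forall>g. cmod (d f g) \<le> C" using cont_bounded[OF cpt d_CG[OF dd f]] by blast
    then have dfF: "okL [(d f, 0)]" by (intro okL_single[where C=C]) blast
    have "\<delta>' (sumop x1 [(f,n)]) = \<delta>' (op_mult (Mop x1 f) (Vp x1 n))" by (simp only: mon_eq[OF okF[OF f]])
    also have "\<dots> = op_add (op_mult (Mop x1 (d f)) (Vp x1 n)) (op_mult (Mop x1 f) op_zero)"
      using dmult[OF B_Mop[OF f] B_Vp, of n] dM f dVp by simp
    also have "\<dots> = sumop x1 [(d f, n)]"
      by (rule ext) (simp add: op_add_def op_mult_def op_zero_def mon_eq[OF dfF, symmetric])
    finally show ?thesis .
  qed
  show "validL L \<Longrightarrow> \<delta>' (sumop x1 L) = sumop x1 (dL d L)"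
  proof (induction L)
    case Nil then show ?case using d0 zero_sumop[of x1] by simp
  next
    case (Cons p L)
    obtain f n where p: "p = (f,n)" by fastforce
    have f: "f \<in> Fspan" and v: "validL L" using Cons by (auto simp: p)
    obtain C where "\<forall>g. cmod (d f g) \<le> C" using cont_bounded[OF cpt d_CG[OF dd f]] by blast
    then have dfF: "okL [(d f, n)]" by (intro okL_single[where C=C]) blast
    have "\<delta>' (sumop x1 (p#L)) = \<delta>' (op_add (sumop x1 [(f,n)]) (sumop x1 L))"
      by (simp add: p cons_eq[OF okF[OF f] valid_okL[OF cpt v]])
    also have "\<dots> = op_add (sumop x1 [(d f, n)]) (sumop x1 (dL d L))"
      using dadd[OF B_mon[OF f] B_sumop[OF v]] dmon[OF f] Cons.IH[OF v] by simp
    also have "\<dots> = sumop x1 (dL d (p#L))"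
      by (simp add: p cons_eq[OF dfF okd[OF cpt dense dd hyp v]])
    finally show ?case .
  qed
qed

end


theorem lemma3p10:
  fixes x1 :: "'g::{topological_ab_group_add, t2_space}"
    and d :: "('g \<Rightarrow> complex) \<Rightarrow> ('g \<Rightarrow> complex)"
  assumes "compact (UNIV :: 'g set)"
    and "infinite (UNIV :: 'g set)"
    and "closure (range (\<lambda>n::int. intmul n x1)) = UNIV"
    and "is_F_derivation d"
    and "\<forall>f\<in>Fspan. (d f) \<circ> (\<lambda>x. x + x1) = d (f \<circ> (\<lambda>x. x + x1))"
  shows "\<exists>\<delta>. is_B_derivation x1 \<delta> \<and> \<delta> Vop = op_zero
            \<and> (\<forall>f\<in>Fspan. \<delta> (Mop x1 f) = Mop x1 (d f))
            \<and> (\<forall>\<delta>'. (is_B_derivation x1 \<delta>' \<and> \<delta>' Vop = op_zero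
                       \<and> (\<forall>f\<in>Fspan. \<delta>' (Mop x1 f) = Mop x1 (d f)))
                     \<longrightarrow> (\<forall>b\<in>Bcal x1. \<delta>' b = \<delta> b))
            \<and> invariant_der x1 \<delta>"
proof -
  note cpt = assms(1) and dense = assms(3) and dd = assms(4) and hyp = assms(5)
  define D where "D = delta x1 d"
  have rep: "\<exists>L. validL L \<and> b = sumop x1 L" if "b \<in> Bcal x1" for b
    using Bcal_rep[OF cpt that] .
  have dsum: "D (sumop x1 L) = sumop x1 (dL d L)" if "validL L" for L
    unfolding D_def by (rule delta_sumop[OF cpt dense dd that])
  have der: "is_B_derivation x1 D"
    unfolding is_B_derivation_def
  proof (intro conjI ballI allI)
    fix b assume "b \<in> Bcal x1"
    then obtain L where L: "validL L" "b = sumop x1 L" using rep by blast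
    show "D b \<in> Balg x1" using sumop_Balg[OF cpt contL_dL[OF dd L(1)]] by (simp add: L dsum)
  next
    fix a b assume "a \<in> Bcal x1" "b \<in> Bcal x1"
    then obtain L1 L2 where L: "validL L1" "a = sumop x1 L1" "validL L2" "b = sumop x1 L2" using rep by meson
    show "D (op_add a b) = op_add (D a) (D b)"
      unfolding D_def L(2,4) by (rule delta_add[OF cpt dense dd hyp L(1,3)])
    show "D (op_mult a b) = op_add (op_mult (D a) b) (op_mult a (D b))"
      unfolding D_def L(2,4) by (rule delta_mult[OF cpt dense dd hyp L(1,3)])
  next
    fix a c assume "a \<in> Bcal x1"
    then obtain L where L: "validL L" "a = sumop x1 L" using rep by blast
    show "D (op_scale c a) = op_scale c (D a)"
      unfolding D_def L(2) by (rule delta_scale[OF cpt dense dd hyp L(1)])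
  qed
  have one: "(\<lambda>_. 1) \<in> (Fspan :: ('g \<Rightarrow> complex) set)" by (rule char_Fspan[OF one_char])
  have dV: "D Vop = op_zero"
  proof -
    have "D Vop = sumop x1 [(d (\<lambda>_. 1), 1)]" unfolding Vop_sumop[of x1] using dsum[of "[(\<lambda>_. 1, 1)]"] one by simp
    also have "\<dots> = sumop x1 []"
      by (rule sumop_eqI) (simp_all add: d_one[OF dd] okL_def, rule exI[of _ 0], simp)
    finally show ?thesis by (simp add: zero_sumop[symmetric])
  qed
  have dM: "\<forall>f\<in>Fspan. D (Mop x1 f) = Mop x1 (d f)"
  proof
    fix f :: "'g \<Rightarrow> complex" assume f: "f \<in> Fspan"
    show "D (Mop x1 f) = Mop x1 (d f)" unfolding Mop_sumop using dsum[of "[(f,0)]"] f by simp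
  qed
  have uniq: "\<forall>\<delta>'. (is_B_derivation x1 \<delta>' \<and> \<delta>' Vop = op_zero
                       \<and> (\<forall>f\<in>Fspan. \<delta>' (Mop x1 f) = Mop x1 (d f)))
                     \<longrightarrow> (\<forall>b\<in>Bcal x1. \<delta>' b = D b)"
  proof (intro allI impI ballI)
    fix \<delta>' b
    assume h: "is_B_derivation x1 \<delta>' \<and> \<delta>' Vop = op_zero \<and> (\<forall>f\<in>Fspan. \<delta>' (Mop x1 f) = Mop x1 (d f))"
      and b: "b \<in> Bcal x1"
    obtain L where L: "validL L" "b = sumop x1 L" using rep[OF b] by blast
    have "\<delta>' (sumop x1 L) = sumop x1 (dL d L)"
      using unique_der[OF cpt dense dd hyp, of \<delta>' L] h L(1) by blast
    then show "\<delta>' b = D b" using dsum[OF L(1)] L(2) by simp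
  qed
  have inv: "invariant_der x1 D"
    unfolding invariant_der_def
  proof (intro allI ballI)
    fix \<theta> b assume b: "b \<in> Bcal x1"
    obtain L where L: "validL L" "b = sumop x1 L" using rep[OF b] by blast
    have okL: "okL L" by (rule valid_okL[OF cpt L(1)])
    have okdL: "okL (dL d L)" by (rule okd[OF cpt dense dd hyp L(1)])
    have "op_mult (op_mult (expL \<theta>) b) (expL (-\<theta>)) = sumop x1 (phL \<theta> L)"
      unfolding L(2) by (rule conj_sumop[OF okL])
    then have "D (op_mult (op_mult (expL \<theta>) b) (expL (-\<theta>))) = sumop x1 (phL \<theta> (dL d L))"
      using dsum[OF validL_phL[OF L(1)]] dL_phL[OF dd L(1)] by simp
    moreover have "op_mult (op_mult (expL (-\<theta>)) (sumop x1 (phL \<theta> (dL d L)))) (expL \<theta>)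
        = sumop x1 (phL (-\<theta>) (phL \<theta> (dL d L)))"
      using conj_sumop[OF okL_phL[OF okdL], where \<theta>="-\<theta>" and ?x1.0=x1] by simp
    moreover have "sumop x1 (phL (-\<theta>) (phL \<theta> (dL d L))) = sumop x1 (dL d L)"
      by (rule phL_phL[OF okdL])
    ultimately show "op_mult (op_mult (expL (-\<theta>)) (D (op_mult (op_mult (expL \<theta>) b) (expL (-\<theta>))))) (expL \<theta>) = D b"
      using dsum[OF L(1)] L(2) by simp
  qed
  show ?thesis using der dV dM uniq inv by blast
qed

end
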